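(* Fix marginals $F_N$ and $F_X$ with $E[N]<\infty$, $E[X]<\infty$. Let $S$ be the aggregate claim amount of any CRM $(N,\underline X)\in\aleph^{FGM}$ with these marginals, and let $S^{(\triangle,\triangle)}$ be the aggregate claim amount of the CRM in $\aleph^{FGM}$ with the same marginals whose associated symmetric Bernoulli sequence is comonotonic, i.e. $\Pr(I_0=\dots=I_k=0)=\Pr(I_0=\dots=I_k=1)=\tfrac12$ for every $k$. Then $S\preceq_{icx}S^{(\triangle,\triangle)}$.
   Context: Collective risk model (CRM): $N$ is a random variable with values in $\mathbb{N}_0$, cdf $F_N$, support $A_N$; $\underline X=\{X_j\}_{j\ge1}$ is a sequence of identically distributed strictly positive random variables with common cdf $F_X$ (generic copy $X$); $S=\sum_{j\ge1}X_j\mathbb{1}_{\{N\ge j\}}$. A $d$-variate FGM copula with parameters $\theta_{j_1\dots j_k}$ is $C(u_1,\dots,u_d)=\prod_{m=1}^d u_m\big(1+\sum_{k=2}^d\sum_{j_1<\dots<j_k}\theta_{j_1\dots j_k}\bar u_{j_1}\cdots\bar u_{j_k}\big)$, $\bar u=1-u$, with parameters such that $1+\sum_{k}\sum_{j_1<\dots<j_k}\theta_{j_1\dots j_k}\varepsilon_{j_1}\cdots\varepsilon_{j_k}\ge0$ for all $\varepsilon\in\{-1,1\}^d$. To it is associated the random vector $\boldsymbol I$ on $\{0,1\}^d$ with pmf $f_{\boldsymbol I}(\boldsymbol i)=2^{-d}\big(1+\sum_{k=2}^d\sum_{j_1<\dots<j_k}(-1)^{i_{j_1}+\dots+i_{j_k}}\theta_{j_1\dots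 j_k}\big)$; this is a bijection between FGM copulas and distributions on $\{0,1\}^d$ with Bernoulli$(1/2)$ margins. A CRM belongs to $\aleph^{FGM}$ if for every $k\in\mathbb{N}_1$, $k\le\sup A_N$, $F_{N,X_1,\dots,X_k}(n,x_1,\dots,x_k)=C_k(F_N(n),F_X(x_1),\dots,F_X(x_k))$ for a $(k+1)$-variate FGM copula $C_k$ with coordinates indexed $0,\dots,k$ (index $0$ for $N$); the associated vectors $(I_0,\dots,I_k)$ form a consistent sequence $\{I_j\}_{j\ge0}$. Increasing convex order: $Z\preceq_{icx}Z^\dagger$ if $E[\phi(Z)]\le E[\phi(Z^\dagger)]$ for all increasing convex $\phi$ for which the expectations exist. *)

theory Defs
  imports "HOL-Probability.Probability"
begin

definition fgm_index :: "nat \<Rightarrow> nat set set" where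
  "fgm_index d = {J. J \<subseteq> {..<d} \<and> 2 \<le> card J}"

definition fgm_valid :: "nat \<Rightarrow> (nat set \<Rightarrow> real) \<Rightarrow> bool" where
  "fgm_valid d \<theta> \<longleftrightarrow>
     (\<forall>\<epsilon> :: nat \<Rightarrow> real. (\<forall>m<d. \<epsilon> m = 1 \<or> \<epsilon> m = -1) \<longrightarrow>
        0 \<le> 1 + (\<Sum>J\<in>fgm_index d. \<theta> J * (\<Prod>j\<in>J. \<epsilon> j)))"

definition fgm_copula :: "nat \<Rightarrow> (nat set \<Rightarrow> real) \<Rightarrow> (nat \<Rightarrow> real) \<Rightarrow> real" where
  "fgm_copula d \<theta> u =
     (\<Prod>m<d. u m) * (1 + (\<Sum>J\<in>fgm_index d. \<theta> J * (\<Prod>j\<in>J. 1 - u j)))"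

text \<open>pmf of the associated symmetric Bernoulli vector I on {0,1}^d.\<close>
definition fgm_pmf :: "nat \<Rightarrow> (nat set \<Rightarrow> real) \<Rightarrow> (nat \<Rightarrow> nat) \<Rightarrow> real" where
  "fgm_pmf d \<theta> i =
     (1/2) ^ d * (1 + (\<Sum>J\<in>fgm_index d. (-1) ^ (\<Sum>j\<in>J. i j) * \<theta> J))"

definition below_sup_support :: "'a measure \<Rightarrow> ('a \<Rightarrow> nat) \<Rightarrow> nat \<Rightarrow> bool" where
  "below_sup_support M N k \<longleftrightarrow> (\<exists>n. k \<le> n \<and> measure M {\<omega>\<in>space M. N \<omega> = n} > 0)"

text \<open>The parameters are given as a
  single function on finite subsets of the index set, the copula C_k using those on
  subsets of {0..k}; this encodes the consistency of the sequence (I_0,...,I_k).\<close>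
definition crm_fgm ::
  "'a measure \<Rightarrow> ('a \<Rightarrow> nat) \<Rightarrow> (nat \<Rightarrow> 'a \<Rightarrow> real) \<Rightarrow> (real \<Rightarrow> real) \<Rightarrow> (real \<Rightarrow> real)
     \<Rightarrow> (nat set \<Rightarrow> real) \<Rightarrow> bool" where
  "crm_fgm M N X FN FX \<theta> \<longleftrightarrow>
     prob_space M \<and>
     N \<in> measurable M (count_space UNIV) \<and>
     (\<forall>j\<ge>1. X j \<in> borel_measurable M \<and> (\<forall>\<omega>\<in>space M. 0 < X j \<omega>)) \<and>
     (\<forall>t. measure M {\<omega>\<in>space M. real (N \<omega>) \<le> t} = FN t) \<and>
     (\<forall>j\<ge>1. \<forall>x. measure M {\<omega>\<in>space M. X j \<omega> \<le> x} = FX x) \<and>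
     (\<forall>k\<ge>1. below_sup_support M N k \<longrightarrow>
        fgm_valid (Suc k) \<theta> \<and>
        (\<forall>(t::real) (x::nat \<Rightarrow> real).
           measure M {\<omega>\<in>space M. real (N \<omega>) \<le> t \<and> (\<forall>j\<in>{1..k}. X j \<omega> \<le> x j)}
           = fgm_copula (Suc k) \<theta> (\<lambda>m. if m = 0 then FN t else FX (x m))))"

definition agg :: "('a \<Rightarrow> nat) \<Rightarrow> (nat \<Rightarrow> 'a \<Rightarrow> real) \<Rightarrow> 'a \<Rightarrow> real" where
  "agg N X \<omega> = (\<Sum>j\<in>{1..N \<omega>}. X j \<omega>)"

definition fgm_comonotone :: "'a measure \<Rightarrow> ('a \<Rightarrow> nat) \<Rightarrow> (nat set \<Rightarrow> real) \<Rightarrow> bool" where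
  "fgm_comonotone M N \<theta> \<longleftrightarrow>
     (\<forall>k\<ge>1. below_sup_support M N k \<longrightarrow>
        fgm_pmf (Suc k) \<theta> (\<lambda>_. 0) = 1/2 \<and> fgm_pmf (Suc k) \<theta> (\<lambda>_. 1) = 1/2)"

end

theory Submission
  imports Defs
begin

definition cube :: "nat \<Rightarrow> (nat \<Rightarrow> nat) set" where
  "cube d = PiE {..<d} (\<lambda>_. {0,1})"

lemma finite_cube[simp]: "finite (cube d)"
  unfolding cube_def by (intro finite_PiE) auto

lemma cube_prod_sum:
  "(\<Sum>i\<in>cube d. \<Prod>m<d. f m (i m)) = (\<Prod>m<d. (f m 0 + f m 1 :: real))"
proof -
  have "(\<Prod>m<d. \<Sum>y\<in>{0,1::nat}. f m y) = (\<Sum>i\<in>cube d. \<Prod>m<d. f m (i m))"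
    unfolding cube_def by (rule prod_sum_PiE) auto
  then show ?thesis by simp
qed

lemma sign_prod:
  fixes J :: "nat set" and i :: "nat \<Rightarrow> nat"
  assumes "J \<subseteq> {..<d}"
  shows "(-1::real) ^ (\<Sum>j\<in>J. i j) = (\<Prod>m<d. if m \<in> J then (-1) ^ i m else 1)"
proof -
  have "(\<Prod>m<d. if m \<in> J then (-1::real) ^ i m else 1) = (\<Prod>m\<in>{..<d} \<inter> J. (-1) ^ i m)"
    by (rule prod.inter_restrict[symmetric]) auto
  also have "{..<d} \<inter> J = J" using assms by auto
  finally show ?thesis by (simp add: power_sum)
qed

lemma fgm_index_sub: "J \<in> fgm_index d \<Longrightarrow> J \<subseteq> {..<d}"
  by (simp add: fgm_index_def)

lemma fgm_index_finite[simp]: "finite (fgm_index d)"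
  unfolding fgm_index_def by (rule finite_subset[of _ "Pow {..<d}"]) auto

lemma fgm_index_two:
  assumes "J \<in> fgm_index d" shows "\<exists>a b. a \<in> J \<and> b \<in> J \<and> a \<noteq> b"
proof -
  have "2 \<le> card J" using assms by (simp add: fgm_index_def)
  then obtain a B where "J = insert a B" "a \<notin> B" "card B \<ge> 1"
    by (metis Suc_1 card_le_Suc_iff)
  then obtain b where "b \<in> B" by (metis card.empty ex_in_conv not_one_le_zero)
  then show ?thesis using \<open>J = insert a B\<close> \<open>a \<notin> B\<close> by blast
qed

lemma cube_sum_sign:
  assumes "J \<in> fgm_index d"
  shows "(\<Sum>i\<in>cube d. (-1::real) ^ (\<Sum>j\<in>J. i j)) = 0"
proof -
  have sub: "J \<subseteq> {..<d}" using assms fgm_index_sub by blast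
  obtain a where a: "a \<in> J" using fgm_index_two[OF assms] by blast
  have "(\<Sum>i\<in>cube d. (-1::real) ^ (\<Sum>j\<in>J. i j))
      = (\<Sum>i\<in>cube d. \<Prod>m<d. (\<lambda>m y. if m \<in> J then (-1::real) ^ y else 1) m (i m))"
    using sign_prod[OF sub] by simp
  also have "\<dots> = (\<Prod>m<d. (if m \<in> J then (-1::real) ^ 0 else 1) + (if m \<in> J then (-1) ^ 1 else 1))"
    by (rule cube_prod_sum)
  also have "\<dots> = 0"
    using a sub by (intro prod_zero) (auto intro!: bexI[of _ a])
  finally show ?thesis .
qed

lemma cube_sum_sign_marg:
  assumes "J \<in> fgm_index d" "m0 < d"
  shows "(\<Sum>i\<in>cube d. real (i m0) * (-1::real) ^ (\<Sum>j\<in>J. i j)) = 0"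
proof -
  have sub: "J \<subseteq> {..<d}" using assms fgm_index_sub by blast
  obtain a where a: "a \<in> J" "a \<noteq> m0" using fgm_index_two[OF assms(1)] by blast
  have "(\<Sum>i\<in>cube d. real (i m0) * (-1::real) ^ (\<Sum>j\<in>J. i j))
      = (\<Sum>i\<in>cube d. \<Prod>m<d. (\<lambda>m y. (if m = m0 then real y else 1) * (if m \<in> J then (-1::real) ^ y else 1)) m (i m))"
    using sign_prod[OF sub] assms(2) by (simp add: prod.distrib prod.delta)
  also have "\<dots> = (\<Prod>m<d. (\<lambda>m y. (if m = m0 then real y else 1) * (if m \<in> J then (-1::real) ^ y else 1)) m 0
          + (\<lambda>m y. (if m = m0 then real y else 1) * (if m \<in> J then (-1::real) ^ y else 1)) m 1)"
    by (rule cube_prod_sum)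
  also have "\<dots> = 0"
    using a sub by (intro prod_zero) (auto intro!: bexI[of _ a])
  finally show ?thesis .
qed

lemma card_cube: "(\<Sum>i\<in>cube d. (1::real)) = 2 ^ d"
  using cube_prod_sum[where d=d and f="\<lambda>_ _. 1"] by simp

lemma card_cube': "real (card (cube d)) = 2 ^ d"
  using card_cube[of d] by simp

lemma cube_marg:
  assumes "m0 < d"
  shows "(\<Sum>i\<in>cube d. real (i m0)) = 2 ^ d / 2"
proof -
  have "(\<Sum>i\<in>cube d. real (i m0)) = (\<Sum>i\<in>cube d. \<Prod>m<d. (\<lambda>m y. if m = m0 then real y else 1) m (i m))"
    using assms by (simp add: prod.delta)
  also have "\<dots> = (\<Prod>m<d. (if m = m0 then real 0 else 1) + (if m = m0 then real 1 else (1::real)))"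
    by (rule cube_prod_sum)
  also have "\<dots> = (\<Prod>m<d. if m = m0 then 1 else 2)"
    by (intro prod.cong) (auto simp del: of_nat_0 of_nat_1)
  also have "\<dots> = (\<Prod>m\<in>{..<d}-{m0}. 2) * 1"
    using assms by (subst prod.remove[of _ m0]) auto
  also have "\<dots> = 2 ^ (d - 1)" using assms by simp
  also have "\<dots> = 2 ^ d / 2" using assms by (cases d) auto
  finally show ?thesis .
qed

lemma pmf_sum1: "(\<Sum>i\<in>cube d. fgm_pmf d \<theta> i) = 1"
proof -
  have "(\<Sum>i\<in>cube d. fgm_pmf d \<theta> i) = (1/2)^d * (\<Sum>i\<in>cube d. (1 + (\<Sum>J\<in>fgm_index d. (-1) ^ (\<Sum>j\<in>J. i j) * \<theta> J)))"
    unfolding fgm_pmf_def by (simp add: sum_distrib_left)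
  also have "\<dots> = (1/2)^d * ((\<Sum>i\<in>cube d. 1) +
      (\<Sum>J\<in>fgm_index d. \<theta> J * (\<Sum>i\<in>cube d. (-1) ^ (\<Sum>j\<in>J. i j))))"
    by (simp only: sum.distrib sum_distrib_left sum.swap[of _ "cube d"] mult.commute)
  also have "\<dots> = 1" by (simp add: cube_sum_sign card_cube' power_one_over)
  finally show ?thesis .
qed

lemma pmf_marg:
  assumes "m0 < d"
  shows "(\<Sum>i\<in>cube d. fgm_pmf d \<theta> i * real (i m0)) = 1/2"
proof -
  have "(\<Sum>i\<in>cube d. fgm_pmf d \<theta> i * real (i m0)) = (1/2)^d * (\<Sum>i\<in>cube d. (real (i m0) + (\<Sum>J\<in>fgm_index d. \<theta> J * (real (i m0) * (-1) ^ (\<Sum>j\<in>J. i j)))))"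
    unfolding fgm_pmf_def by (simp add: sum_distrib_left sum_distrib_right algebra_simps)
  also have "\<dots> = (1/2)^d * ((\<Sum>i\<in>cube d. real (i m0)) +
      (\<Sum>J\<in>fgm_index d. \<theta> J * (\<Sum>i\<in>cube d. real (i m0) * (-1) ^ (\<Sum>j\<in>J. i j))))"
    by (simp only: sum.distrib sum_distrib_left sum.swap[of _ "cube d"])
  also have "\<dots> = 1/2" using assms by (simp add: cube_sum_sign_marg cube_marg power_one_over)
  finally show ?thesis .
qed

lemma pmf_nonneg:
  assumes "fgm_valid d \<theta>" "i \<in> cube d"
  shows "0 \<le> fgm_pmf d \<theta> i"
proof -
  define \<epsilon> where "\<epsilon> m = (-1::real) ^ i m" for m
  have "\<forall>m<d. \<epsilon> m = 1 \<or> \<epsilon> m = -1" using assms(2)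
    by (force simp: \<epsilon>_def cube_def PiE_iff)
  then have "0 \<le> 1 + (\<Sum>J\<in>fgm_index d. \<theta> J * (\<Prod>j\<in>J. \<epsilon> j))"
    using assms(1) by (simp add: fgm_valid_def)
  also have "(\<Sum>J\<in>fgm_index d. \<theta> J * (\<Prod>j\<in>J. \<epsilon> j)) = (\<Sum>J\<in>fgm_index d. (-1) ^ (\<Sum>j\<in>J. i j) * \<theta> J)"
    by (simp add: \<epsilon>_def power_sum mult.commute)
  finally show ?thesis unfolding fgm_pmf_def by simp
qed

definition Gf :: "nat \<Rightarrow> real \<Rightarrow> real" where
  "Gf b u = (if b = 0 then 2 * u - u^2 else u^2)"

lemma copula_mix:
  "(\<Sum>i\<in>cube d. fgm_pmf d \<theta> i * (\<Prod>m<d. Gf (i m) (u m))) = fgm_copula d \<theta> u"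
proof -
  have A: "(\<Sum>i\<in>cube d. \<Prod>m<d. Gf (i m) (u m)) = 2^d * (\<Prod>m<d. u m)"
  proof -
    have "(\<Sum>i\<in>cube d. \<Prod>m<d. Gf (i m) (u m)) = (\<Prod>m<d. Gf 0 (u m) + Gf 1 (u m))"
      by (rule cube_prod_sum)
    also have "\<dots> = (\<Prod>m<d. 2 * u m)" by (simp add: Gf_def)
    finally show ?thesis by (simp add: prod.distrib)
  qed
  have B: "(\<Sum>i\<in>cube d. (-1) ^ (\<Sum>j\<in>J. i j) * (\<Prod>m<d. Gf (i m) (u m)))
       = 2^d * ((\<Prod>m<d. u m) * (\<Prod>j\<in>J. 1 - u j))" if J: "J \<in> fgm_index d" for J
  proof -
    have sub: "J \<subseteq> {..<d}" using J fgm_index_sub by blast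
    have "(\<Sum>i\<in>cube d. (-1) ^ (\<Sum>j\<in>J. i j) * (\<Prod>m<d. Gf (i m) (u m)))
       = (\<Sum>i\<in>cube d. \<Prod>m<d. (\<lambda>m y. (if m \<in> J then (-1::real) ^ y else 1) * Gf y (u m)) m (i m))"
      using sign_prod[OF sub] by (simp add: prod.distrib)
    also have "\<dots> = (\<Prod>m<d. (\<lambda>m y. (if m \<in> J then (-1::real) ^ y else 1) * Gf y (u m)) m 0
         + (\<lambda>m y. (if m \<in> J then (-1::real) ^ y else 1) * Gf y (u m)) m 1)"
      by (rule cube_prod_sum)
    also have "\<dots> = (\<Prod>m<d. 2 * (u m * (if m \<in> J then 1 - u m else 1)))"
      by (intro prod.cong) (auto simp: Gf_def power2_eq_square algebra_simps)
    also have "\<dots> = 2^d * ((\<Prod>m<d. u m) * (\<Prod>m<d. if m \<in> J then 1 - u m else 1))"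
      by (simp add: prod.distrib)
    also have "(\<Prod>m<d. if m \<in> J then 1 - u m else 1) = (\<Prod>j\<in>{..<d} \<inter> J. 1 - u j)"
      by (rule prod.inter_restrict[symmetric]) auto
    also have "{..<d} \<inter> J = J" using sub by auto
    finally show ?thesis .
  qed
  have "(\<Sum>i\<in>cube d. fgm_pmf d \<theta> i * (\<Prod>m<d. Gf (i m) (u m)))
     = (1/2)^d * ((\<Sum>i\<in>cube d. \<Prod>m<d. Gf (i m) (u m)) + (\<Sum>J\<in>fgm_index d. \<theta> J *
          (\<Sum>i\<in>cube d. (-1) ^ (\<Sum>j\<in>J. i j) * (\<Prod>m<d. Gf (i m) (u m)))))"
  proof -
    have "(\<Sum>i\<in>cube d. fgm_pmf d \<theta> i * (\<Prod>m<d. Gf (i m) (u m)))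
      = (1/2)^d * (\<Sum>i\<in>cube d. ((\<Prod>m<d. Gf (i m) (u m)) + (\<Sum>J\<in>fgm_index d. \<theta> J *
          ((-1) ^ (\<Sum>j\<in>J. i j) * (\<Prod>m<d. Gf (i m) (u m))))))"
      unfolding fgm_pmf_def by (simp add: sum_distrib_left sum_distrib_right algebra_simps)
    also have "\<dots> = (1/2)^d * ((\<Sum>i\<in>cube d. \<Prod>m<d. Gf (i m) (u m)) + (\<Sum>J\<in>fgm_index d. \<theta> J *
          (\<Sum>i\<in>cube d. (-1) ^ (\<Sum>j\<in>J. i j) * (\<Prod>m<d. Gf (i m) (u m)))))" by (simp only: sum.distrib sum_distrib_left sum.swap[of _ "cube d"])
    finally show ?thesis .
  qed
  also have "\<dots> = fgm_copula d \<theta> u"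
    by (simp add: A B fgm_copula_def power_one_over algebra_simps sum_distrib_left)
  finally show ?thesis .
qed

definition cz :: "nat \<Rightarrow> nat \<Rightarrow> nat" where "cz d = restrict (\<lambda>_. 0) {..<d}"
definition co :: "nat \<Rightarrow> nat \<Rightarrow> nat" where "co d = restrict (\<lambda>_. 1) {..<d}"
definition pre :: "nat \<Rightarrow> (nat \<Rightarrow> nat) \<Rightarrow> nat \<Rightarrow> nat \<Rightarrow> nat" where
  "pre d i j = restrict (\<lambda>m. if m < j then i m else 0) {..<d}"

lemma cz_cube[simp]: "cz d \<in> cube d" by (simp add: cz_def cube_def)
lemma co_cube[simp]: "co d \<in> cube d" by (simp add: co_def cube_def)
lemma cz_ne_co: "0 < d \<Longrightarrow> cz d \<noteq> co d"
  by (metis co_def cz_def lessThan_iff restrict_apply' zero_neq_one)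

lemma pre_cube: "i \<in> cube d \<Longrightarrow> pre d i j \<in> cube d"
  by (auto simp: pre_def cube_def PiE_iff)

lemma pre_0: "pre d i 0 = cz d" by (simp add: pre_def cz_def)

lemma pre_d: "i \<in> cube d \<Longrightarrow> pre d i d = i"
  by (auto simp: pre_def cube_def PiE_iff extensional_def restrict_def)

lemma pre_co_d: "pre d (co d) d = co d" by (rule pre_d) simp

lemma pre_Suc: "j < d \<Longrightarrow> pre d i (Suc j) = (pre d i j)(j := i j)"
  by (auto simp: pre_def restrict_def)

lemma pre_at: "j < d \<Longrightarrow> pre d i j j = 0"
  by (auto simp: pre_def restrict_def)

lemma supermod_bound:
  fixes p h :: "(nat \<Rightarrow> nat) \<Rightarrow> real"
  assumes pnn: "\<And>i. i \<in> cube d \<Longrightarrow> 0 \<le> p i"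
    and marg: "\<And>m. m < d \<Longrightarrow> (\<Sum>i\<in>cube d. p i * real (i m)) = 1/2"
    and sum1: "(\<Sum>i\<in>cube d. p i) = 1"
    and incd: "\<And>x y j. x \<in> cube d \<Longrightarrow> y \<in> cube d \<Longrightarrow> j < d \<Longrightarrow> (\<forall>m<d. x m \<le> y m)
       \<Longrightarrow> x j = 0 \<Longrightarrow> y j = 0 \<Longrightarrow> h (x(j:=1)) - h x \<le> h (y(j:=1)) - h y"
  shows "(\<Sum>i\<in>cube d. p i * h i) \<le> (h (cz d) + h (co d)) / 2"
proof -
  define D where "D j = h (pre d (co d) (Suc j)) - h (pre d (co d) j)" for j
  have termb: "h (pre d i (Suc j)) - h (pre d i j) \<le> real (i j) * D j"
    if i: "i \<in> cube d" and j: "j < d" for i j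
  proof -
    have ij: "i j = 0 \<or> i j = 1" using i j by (auto simp: cube_def PiE_iff)
    show ?thesis
    proof (cases "i j = 0")
      case True
      then have "pre d i (Suc j) = pre d i j"
        using pre_Suc[OF j, of i] pre_at[OF j, of i] by (metis fun_upd_triv)
      then show ?thesis using True by simp
    next
      case False
      then have ij1: "i j = 1" using ij by simp
      have "co d j = 1" using j by (simp add: co_def)
      have le: "\<forall>m<d. pre d i j m \<le> pre d (co d) j m"
        using i by (force simp: pre_def co_def cube_def PiE_iff)
      have "h ((pre d i j)(j:=1)) - h (pre d i j) \<le> h ((pre d (co d) j)(j:=1)) - h (pre d (co d) j)"
        by (rule incd[OF pre_cube[OF i] pre_cube[OF co_cube] j le pre_at[OF j] pre_at[OF j]])
      then show ?thesis using ij1 \<open>co d j = 1\<close> pre_Suc[OF j, of i] pre_Suc[OF j, of "co d"]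
        by (simp add: D_def)
    qed
  qed
  have hi: "h i \<le> h (cz d) + (\<Sum>j<d. real (i j) * D j)" if i: "i \<in> cube d" for i
  proof -
    have "h i - h (cz d) = (\<Sum>j<d. h (pre d i (Suc j)) - h (pre d i j))"
      by (subst sum_lessThan_telescope) (simp add: pre_d[OF i] pre_0)
    also have "\<dots> \<le> (\<Sum>j<d. real (i j) * D j)"
      by (intro sum_mono termb[OF i]) auto
    finally show ?thesis by simp
  qed
  have "(\<Sum>i\<in>cube d. p i * h i) \<le> (\<Sum>i\<in>cube d. p i * (h (cz d) + (\<Sum>j<d. real (i j) * D j)))"
    by (intro sum_mono mult_left_mono hi pnn)
  also have "\<dots> = (\<Sum>i\<in>cube d. p i) * h (cz d) + (\<Sum>j<d. (\<Sum>i\<in>cube d. p i * real (i j)) * D j)"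
    by (simp add: algebra_simps sum.distrib sum_distrib_left sum_distrib_right sum.swap[of _ "cube d"])
  also have "\<dots> = h (cz d) + (\<Sum>j<d. D j) / 2"
    by (simp add: sum1 marg sum_divide_distrib)
  also have "(\<Sum>j<d. D j) = h (co d) - h (cz d)"
    unfolding D_def by (subst sum_lessThan_telescope) (simp add: pre_co_d pre_0)
  finally have "(\<Sum>i\<in>cube d. p i * h i) \<le> h (cz d) + (h (co d) - h (cz d)) / 2" .
  moreover have "h (cz d) + (h (co d) - h (cz d)) / 2 = (h (cz d) + h (co d)) / 2"
    by (simp add: field_simps)
  ultimately show ?thesis by simp
qed

lemma como_sum:
  fixes p h :: "(nat \<Rightarrow> nat) \<Rightarrow> 'b::{comm_semiring_1}"
  assumes "0 < d" "\<And>i. i \<in> cube d - {cz d, co d} \<Longrightarrow> p i = 0"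
  shows "(\<Sum>i\<in>cube d. p i * h i) = p (cz d) * h (cz d) + p (co d) * h (co d)"
proof -
  have "(\<Sum>i\<in>cube d. p i * h i) = (\<Sum>i\<in>{cz d, co d}. p i * h i)"
    using assms(2) by (intro sum.mono_neutral_right) auto
  also have "\<dots> = p (cz d) * h (cz d) + p (co d) * h (co d)"
    using cz_ne_co[OF assms(1)] by simp
  finally show ?thesis .
qed

lemma como_zero:
  assumes "0 < d" "fgm_valid d \<theta>" "fgm_pmf d \<theta> (cz d) = 1/2" "fgm_pmf d \<theta> (co d) = 1/2"
    "i \<in> cube d - {cz d, co d}"
  shows "fgm_pmf d \<theta> i = 0"
proof -
  have "(\<Sum>i\<in>cube d. fgm_pmf d \<theta> i) = (\<Sum>i\<in>{cz d, co d}. fgm_pmf d \<theta> i) + (\<Sum>i\<in>cube d - {cz d, co d}. fgm_pmf d \<theta> i)"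
    by (subst sum.subset_diff[of "{cz d, co d}"]) auto
  then have "(\<Sum>i\<in>cube d - {cz d, co d}. fgm_pmf d \<theta> i) = 0"
    using pmf_sum1[of d \<theta>] assms(3,4) cz_ne_co[OF assms(1)] by simp
  then show ?thesis
    using sum_nonneg_eq_0_iff[of "cube d - {cz d, co d}" "fgm_pmf d \<theta>"] pmf_nonneg[OF assms(2)] assms(5)
    by auto
qed

definition selb :: "nat \<Rightarrow> real \<times> real \<Rightarrow> real" where
  "selb b w = (if b = 0 then min (fst w) (snd w) else max (fst w) (snd w))"

lemma selb_measurable[measurable]: "selb b \<in> borel_measurable (borel \<Otimes>\<^sub>M borel)"
  unfolding selb_def by measurable

lemma pair_selb:
  assumes P: "prob_space \<nu>" and S: "sets \<nu> = sets borel"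
  shows "emeasure (\<nu> \<Otimes>\<^sub>M \<nu>) {w. selb b w \<le> x} = ennreal (Gf b (measure \<nu> {..x}))"
proof -
  interpret prob_space \<nu> by fact
  interpret PP: prob_space "\<nu> \<Otimes>\<^sub>M \<nu>" by (intro prob_space_pair P)
  have A[measurable]: "{..x} \<in> sets \<nu>" "{x<..} \<in> sets \<nu>" using S by auto
  have sp: "space \<nu> = UNIV" using S sets_eq_imp_space_eq by force
  have spp: "space (\<nu> \<Otimes>\<^sub>M \<nu>) = UNIV" by (simp add: space_pair_measure sp)
  have c: "measure \<nu> {x<..} = 1 - measure \<nu> {..x}"
  proof -
    have "{x<..} = space \<nu> - {..x}" using sp by auto
    then show ?thesis using prob_compl[OF A(1)] by simp
  qed
  show ?thesis
  proof (cases "b = 0")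
    case True
    have "{w. selb b w \<le> x} = space (\<nu> \<Otimes>\<^sub>M \<nu>) - {x<..} \<times> {x<..}"
      using True by (auto simp: selb_def spp min_def)
    then have "measure (\<nu> \<Otimes>\<^sub>M \<nu>) {w. selb b w \<le> x} = 1 - measure (\<nu> \<Otimes>\<^sub>M \<nu>) ({x<..} \<times> {x<..})"
      by (simp add: PP.prob_compl)
    also have "measure (\<nu> \<Otimes>\<^sub>M \<nu>) ({x<..} \<times> {x<..}) = measure \<nu> {x<..} * measure \<nu> {x<..}"
      by (simp add: measure_def emeasure_pair_measure_Times enn2real_mult)
    finally have "measure (\<nu> \<Otimes>\<^sub>M \<nu>) {w. selb b w \<le> x} = Gf b (measure \<nu> {..x})"
      using True c by (simp add: Gf_def power2_eq_square algebra_simps)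
    then show ?thesis by (simp add: PP.emeasure_eq_measure)
  next
    case False
    have "{w. selb b w \<le> x} = {..x} \<times> {..x}"
      using False by (auto simp: selb_def)
    then have "emeasure (\<nu> \<Otimes>\<^sub>M \<nu>) {w. selb b w \<le> x} = emeasure \<nu> {..x} * emeasure \<nu> {..x}"
      by (simp add: emeasure_pair_measure_Times)
    then show ?thesis using False
      by (simp add: Gf_def emeasure_eq_measure power2_eq_square ennreal_mult)
  qed
qed

lemma Gf_nonneg: "0 \<le> u \<Longrightarrow> u \<le> 1 \<Longrightarrow> 0 \<le> Gf b u"
proof -
  assume "0 \<le> u" "u \<le> 1"
  then have "u * u \<le> 1 * u" by (intro mult_right_mono) auto
  then show ?thesis using \<open>0 \<le> u\<close> by (auto simp: Gf_def power2_eq_square)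
qed

lemma sets_Y_gen:
  fixes d :: nat
  shows
  "sets (PiM {..<d} (\<lambda>_. borel :: real measure)) =
   sigma_sets (PiE {..<d} (\<lambda>_. UNIV)) (range (\<lambda>a::nat\<Rightarrow>real. PiE {..<d} (\<lambda>j. {..a j})))"
proof -
  define P where "P = {{f\<in>(\<Pi>\<^sub>E i\<in>{..<d}. (UNIV::real set)). \<forall>i\<in>j. f i \<in> A i} | A j. j \<in> {{..<d}} \<and> A \<in> Pi j (\<lambda>_. range atMost)}"
  have "sets (\<Pi>\<^sub>M i\<in>{..<d}. sigma UNIV (range atMost)) = sets (sigma (\<Pi>\<^sub>E i\<in>{..<d}. (UNIV::real set)) P)"
    unfolding P_def
  proof (rule sets_PiM_sigma)
    show "\<exists>S\<subseteq>range atMost. countable S \<and> (UNIV::real set) = \<Union>S" for i :: nat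
    proof (intro exI conjI)
      show "range (\<lambda>n::nat. {..real n}) \<subseteq> range atMost" by auto
      show "(UNIV::real set) = \<Union>(range (\<lambda>n::nat. {..real n}))"
        by (auto intro: real_arch_simple)
    qed auto
  qed auto
  moreover have "P = range (\<lambda>a::nat\<Rightarrow>real. PiE {..<d} (\<lambda>j. {..a j}))"
  proof
    show "P \<subseteq> range (\<lambda>a::nat\<Rightarrow>real. PiE {..<d} (\<lambda>j. {..a j}))"
    proof
      fix S assume "S \<in> P"
      then obtain A where A: "A \<in> Pi {..<d} (\<lambda>_. range atMost)" and S: "S = {f\<in>(\<Pi>\<^sub>E i\<in>{..<d}. (UNIV::real set)). \<forall>i\<in>{..<d}. f i \<in> A i}"
        unfolding P_def by auto
      define a where "a j = (SOME x. A j = {..x})" for j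
      have "A j = {..a j}" if "j < d" for j
      proof -
        have "\<exists>x. A j = {..x}" using A that by auto
        then show ?thesis unfolding a_def by (rule someI_ex)
      qed
      then have "S = PiE {..<d} (\<lambda>j. {..a j})" unfolding S by (auto simp: PiE_iff extensional_def)
      then show "S \<in> range (\<lambda>a::nat\<Rightarrow>real. PiE {..<d} (\<lambda>j. {..a j}))" by auto
    qed
    show "range (\<lambda>a::nat\<Rightarrow>real. PiE {..<d} (\<lambda>j. {..a j})) \<subseteq> P"
    proof
      fix S assume "S \<in> range (\<lambda>a::nat\<Rightarrow>real. PiE {..<d} (\<lambda>j. {..a j}))"
      then obtain a :: "nat \<Rightarrow> real" where S: "S = PiE {..<d} (\<lambda>j. {..a j})" by auto
      have "S = {f\<in>(\<Pi>\<^sub>E i\<in>{..<d}. (UNIV::real set)). \<forall>i\<in>{..<d}. f i \<in> {..a i}}"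
        unfolding S by (auto simp: PiE_iff extensional_def)
      then show "S \<in> P" unfolding P_def
        by (intro CollectI exI[of _ "\<lambda>i. {..a i}"] exI[of _ "{..<d}"]) auto
    qed
  qed
  moreover have "P \<subseteq> Pow (\<Pi>\<^sub>E i\<in>{..<d}. (UNIV::real set))" unfolding P_def by auto
  ultimately show ?thesis
    by (simp add: borel_eq_atMost[symmetric])
qed

definition Yd :: "nat \<Rightarrow> (nat \<Rightarrow> real) measure" where
  "Yd d = PiM {..<d} (\<lambda>_. borel)"
definition PPd :: "nat \<Rightarrow> (nat \<Rightarrow> real measure) \<Rightarrow> (nat \<Rightarrow> real \<times> real) measure" where
  "PPd d \<nu>s = PiM {..<d} (\<lambda>j. \<nu>s j \<Otimes>\<^sub>M \<nu>s j)"
definition selv :: "nat \<Rightarrow> (nat \<Rightarrow> nat) \<Rightarrow> (nat \<Rightarrow> real \<times> real) \<Rightarrow> nat \<Rightarrow> real" where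
  "selv d i w = (\<lambda>j\<in>{..<d}. selb (i j) (w j))"

locale nus =
  fixes \<nu>s :: "nat \<Rightarrow> real measure"
  assumes nu_prob: "\<And>j. prob_space (\<nu>s j)"
    and nu_sets: "\<And>j. sets (\<nu>s j) = sets borel"
begin

lemma sets_PPd: "sets (PPd d \<nu>s) = sets (PiM {..<d} (\<lambda>_. borel \<Otimes>\<^sub>M borel))"
  unfolding PPd_def by (intro sets_PiM_cong refl sets_pair_measure_cong nu_sets)

lemma space_PPd: "space (PPd d \<nu>s) = PiE {..<d} (\<lambda>_. UNIV)"
  using sets_eq_imp_space_eq[OF sets_PPd] by (simp add: space_PiM space_pair_measure)

lemma selv_meas: "selv d i \<in> measurable (PPd d \<nu>s) (Yd d)"
  unfolding measurable_cong_sets[OF sets_PPd refl] Yd_def selv_def by measurable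

lemma prob_PPd: "prob_space (PPd d \<nu>s)"
  unfolding PPd_def by (intro prob_space_PiM prob_space_pair nu_prob)

lemma Q_gen:
  "emeasure (distr (PPd d \<nu>s) (Yd d) (selv d i)) (PiE {..<d} (\<lambda>j. {..a j}))
   = ennreal (\<Prod>j<d. Gf (i j) (measure (\<nu>s j) {..a j}))"
proof -
  interpret PR: product_prob_space "\<lambda>j. \<nu>s j \<Otimes>\<^sub>M \<nu>s j"
    by (intro product_prob_spaceI prob_space_pair nu_prob)
  have G: "PiE {..<d} (\<lambda>j. {..a j}) \<in> sets (Yd d)"
    unfolding Yd_def by (intro sets_PiM_I_finite) auto
  have pre: "selv d i -` PiE {..<d} (\<lambda>j. {..a j}) \<inter> space (PPd d \<nu>s)
      = PiE {..<d} (\<lambda>j. {w. selb (i j) w \<le> a j})"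
  proof (rule set_eqI)
    fix x
    have 1: "selv d i x \<in> PiE {..<d} (\<lambda>j. {..a j}) \<longleftrightarrow> (\<forall>j<d. selb (i j) (x j) \<le> a j)"
      unfolding selv_def restrict_PiE_iff by auto
    have 2: "x \<in> PiE {..<d} (\<lambda>j. {w. selb (i j) w \<le> a j}) \<longleftrightarrow> x \<in> extensional {..<d} \<and> (\<forall>j<d. selb (i j) (x j) \<le> a j)"
      by (auto simp: PiE_iff)
    have 3: "x \<in> space (PPd d \<nu>s) \<longleftrightarrow> x \<in> extensional {..<d}"
      by (simp add: space_PPd PiE_iff)
    show "x \<in> selv d i -` PiE {..<d} (\<lambda>j. {..a j}) \<inter> space (PPd d \<nu>s) \<longleftrightarrow> x \<in> PiE {..<d} (\<lambda>j. {w. selb (i j) w \<le> a j})"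
      using 1 2 3 by blast
  qed
  have sj: "{w. selb (i j) w \<le> a j} \<in> sets (\<nu>s j \<Otimes>\<^sub>M \<nu>s j)" for j
  proof -
    have "{w \<in> space (borel \<Otimes>\<^sub>M borel). selb (i j) w \<le> a j} \<in> sets (borel \<Otimes>\<^sub>M borel)" by measurable
    then have "{w. selb (i j) w \<le> a j} \<in> sets (borel \<Otimes>\<^sub>M borel)" by (simp add: space_pair_measure)
    then show ?thesis using sets_pair_measure_cong[OF nu_sets nu_sets] by simp
  qed
  have "emeasure (distr (PPd d \<nu>s) (Yd d) (selv d i)) (PiE {..<d} (\<lambda>j. {..a j}))
      = emeasure (PPd d \<nu>s) (PiE {..<d} (\<lambda>j. {w. selb (i j) w \<le> a j}))"
    by (subst emeasure_distr[OF selv_meas G]) (simp add: pre)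
  also have "\<dots> = (\<Prod>j<d. emeasure (\<nu>s j \<Otimes>\<^sub>M \<nu>s j) {w. selb (i j) w \<le> a j})"
    unfolding PPd_def by (rule PR.emeasure_PiM) (auto simp: sj)
  also have "\<dots> = (\<Prod>j<d. ennreal (Gf (i j) (measure (\<nu>s j) {..a j})))"
    by (intro prod.cong refl pair_selb nu_prob nu_sets)
  also have "\<dots> = ennreal (\<Prod>j<d. Gf (i j) (measure (\<nu>s j) {..a j}))"
    by (intro prod_ennreal Gf_nonneg measure_nonneg prob_space.prob_le_1 nu_prob)
  finally show ?thesis .
qed


lemma law:
  fixes M :: "'a measure" and V :: "'a \<Rightarrow> nat \<Rightarrow> real" and p :: "(nat\<Rightarrow>nat) \<Rightarrow> real"
    and g :: "(nat \<Rightarrow> real) \<Rightarrow> ennreal"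
  assumes M: "prob_space M"
    and V: "V \<in> measurable M (Yd d)"
    and p: "\<And>i. i \<in> cube d \<Longrightarrow> 0 \<le> p i"
    and cdf: "\<And>a. measure M {\<omega>\<in>space M. \<forall>j<d. V \<omega> j \<le> a j}
        = (\<Sum>i\<in>cube d. p i * (\<Prod>j<d. Gf (i j) (measure (\<nu>s j) {..a j})))"
    and g: "g \<in> borel_measurable (Yd d)"
  shows "(\<integral>\<^sup>+\<omega>. g (V \<omega>) \<partial>M) = (\<Sum>i\<in>cube d. ennreal (p i) * (\<integral>\<^sup>+w. g (selv d i w) \<partial>PPd d \<nu>s))"
proof -
  interpret M: prob_space M by fact
  define D where "D = density (count_space (cube d)) (\<lambda>i. ennreal (p i))"
  define Qk where "Qk i = distr (PPd d \<nu>s) (Yd d) (selv d i)" for i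
  have sD: "sets D = sets (count_space (cube d))" unfolding D_def by simp
  have spD: "space D = cube d" using sets_eq_imp_space_eq[OF sD] by simp
  have spD': "space D \<noteq> {}" using spD cz_cube by blast
  have Qk_meas: "Qk \<in> measurable D (subprob_algebra (Yd d))"
    unfolding measurable_cong_sets[OF sD refl] measurable_count_space_eq1
  proof
    fix i assume "i \<in> cube d"
    have "prob_space (Qk i)" unfolding Qk_def
      by (rule prob_space.prob_space_distr[OF prob_PPd selv_meas])
    then show "Qk i \<in> space (subprob_algebra (Yd d))"
      by (simp add: space_subprob_algebra prob_space_imp_subprob_space Qk_def)
  qed
  define Mix where "Mix = bind D Qk"
  have sMix: "sets Mix = sets (Yd d)" unfolding Mix_def
    by (rule sets_bind[OF _ spD']) (use Qk_meas in \<open>auto dest: measurable_space simp: space_subprob_algebra\<close>)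
  have cube_int: "(\<integral>\<^sup>+i. ennreal (p i) * f i \<partial>count_space (cube d)) = (\<Sum>i\<in>cube d. ennreal (p i) * f i)" for f
    by (rule nn_integral_count_space_finite) simp
  have Dint: "(\<integral>\<^sup>+i. f i \<partial>D) = (\<Sum>i\<in>cube d. ennreal (p i) * f i)" for f
    unfolding D_def by (subst nn_integral_density) (auto simp: cube_int)
  define \<Omega> where "\<Omega> = PiE {..<d} (\<lambda>_. UNIV::real set)"
  define E where "E = range (\<lambda>a::nat\<Rightarrow>real. PiE {..<d} (\<lambda>j. {..a j}))"
  have sY: "sets (Yd d) = sigma_sets \<Omega> E" unfolding Yd_def \<Omega>_def E_def by (rule sets_Y_gen)
  have spY: "space (Yd d) = \<Omega>" unfolding Yd_def \<Omega>_def by (simp add: space_PiM)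
  have eqm: "distr M (Yd d) V = Mix"
  proof (rule measure_eqI_generator_eq[where \<Omega> = \<Omega> and E = E and A = "\<lambda>n. PiE {..<d} (\<lambda>_. {..real n})"])
    show "Int_stable E" unfolding E_def Int_stable_def
    proof (clarify)
      fix a b :: "nat \<Rightarrow> real"
      have "PiE {..<d} (\<lambda>j. {..a j}) \<inter> PiE {..<d} (\<lambda>j. {..b j}) = PiE {..<d} (\<lambda>j. {..min (a j) (b j)})"
        by (simp add: PiE_Int)
      then show "PiE {..<d} (\<lambda>j. {..a j}) \<inter> PiE {..<d} (\<lambda>j. {..b j}) \<in> range (\<lambda>a::nat\<Rightarrow>real. PiE {..<d} (\<lambda>j. {..a j}))"
        using rangeI[of "\<lambda>a::nat\<Rightarrow>real. PiE {..<d} (\<lambda>j. {..a j})" "\<lambda>j. min (a j) (b j)"] by simp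
    qed
    show "E \<subseteq> Pow \<Omega>" unfolding E_def \<Omega>_def by (rule image_subsetI, rule PowI, rule PiE_mono) simp
    show "sets (distr M (Yd d) V) = sigma_sets \<Omega> E" using sY by simp
    show "sets Mix = sigma_sets \<Omega> E" using sY sMix by simp
    show "range (\<lambda>n. PiE {..<d} (\<lambda>_. {..real n})) \<subseteq> E" unfolding E_def by auto
    show "(\<Union>n. PiE {..<d} (\<lambda>_. {..real n})) = \<Omega>"
    proof
      show "(\<Union>n. PiE {..<d} (\<lambda>_. {..real n})) \<subseteq> \<Omega>" unfolding \<Omega>_def by (rule UN_least, rule PiE_mono) simp
      show "\<Omega> \<subseteq> (\<Union>n. PiE {..<d} (\<lambda>_. {..real n}))"
      proof
        fix x assume x: "x \<in> \<Omega>"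
        obtain n where n: "(\<Sum>j<d. \<bar>x j\<bar>) \<le> real n" using real_arch_simple by blast
        have "x j \<le> real n" if "j < d" for j
        proof -
          have "\<bar>x j\<bar> \<le> (\<Sum>j<d. \<bar>x j\<bar>)" by (rule member_le_sum) (use that in auto)
          then show ?thesis using n by linarith
        qed
        then have "x \<in> PiE {..<d} (\<lambda>_. {..real n})" using x unfolding \<Omega>_def by (simp add: PiE_iff)
        then show "x \<in> (\<Union>n. PiE {..<d} (\<lambda>_. {..real n}))" by blast
      qed
    qed
    show "emeasure (distr M (Yd d) V) (PiE {..<d} (\<lambda>_. {..real n})) \<noteq> \<infinity>" for n
    proof -
      interpret P: prob_space "distr M (Yd d) V" by (rule M.prob_space_distr[OF V])
      show ?thesis by simp
    qed
    fix X assume "X \<in> E"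
    then obtain a :: "nat \<Rightarrow> real" where X: "X = PiE {..<d} (\<lambda>j. {..a j})" unfolding E_def by blast
    have XY: "X \<in> sets (Yd d)" unfolding X Yd_def by (intro sets_PiM_I_finite) auto
    have pre: "V -` X \<inter> space M = {\<omega>\<in>space M. \<forall>j<d. V \<omega> j \<le> a j}"
    proof -
      have "V \<omega> \<in> \<Omega>" if "\<omega> \<in> space M" for \<omega> using measurable_space[OF V that] spY by simp
      then show ?thesis
      proof (intro set_eqI iffI)
        fix \<omega> assume "\<omega> \<in> V -` X \<inter> space M"
        then show "\<omega> \<in> {\<omega>\<in>space M. \<forall>j<d. V \<omega> j \<le> a j}" unfolding X by (simp add: PiE_iff)
      next
        fix \<omega> assume a: "\<omega> \<in> {\<omega>\<in>space M. \<forall>j<d. V \<omega> j \<le> a j}" and "\<And>\<omega>. \<omega> \<in> space M \<Longrightarrow> V \<omega> \<in> \<Omega>"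
        then have "V \<omega> \<in> \<Omega>" by simp
        then show "\<omega> \<in> V -` X \<inter> space M" using a unfolding X \<Omega>_def by (simp add: PiE_iff)
      qed
    qed
    have "emeasure (distr M (Yd d) V) X = ennreal (\<Sum>i\<in>cube d. p i * (\<Prod>j<d. Gf (i j) (measure (\<nu>s j) {..a j})))"
      by (simp add: emeasure_distr[OF V XY] pre M.emeasure_eq_measure cdf)
    also have "\<dots> = (\<Sum>i\<in>cube d. ennreal (p i) * ennreal (\<Prod>j<d. Gf (i j) (measure (\<nu>s j) {..a j})))"
    proof -
      have nn: "0 \<le> (\<Prod>j<d. Gf (i j) (measure (\<nu>s j) {..a j}))" for i
        by (intro prod_nonneg Gf_nonneg measure_nonneg prob_space.prob_le_1 nu_prob)
      have "ennreal (\<Sum>i\<in>cube d. p i * (\<Prod>j<d. Gf (i j) (measure (\<nu>s j) {..a j})))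
        = (\<Sum>i\<in>cube d. ennreal (p i * (\<Prod>j<d. Gf (i j) (measure (\<nu>s j) {..a j}))))"
        by (rule sum_ennreal[symmetric]) (intro mult_nonneg_nonneg p nn; assumption)
      also have "\<dots> = (\<Sum>i\<in>cube d. ennreal (p i) * ennreal (\<Prod>j<d. Gf (i j) (measure (\<nu>s j) {..a j})))"
        by (intro sum.cong refl ennreal_mult p nn)
      finally show ?thesis .
    qed
    also have "\<dots> = (\<Sum>i\<in>cube d. ennreal (p i) * emeasure (Qk i) X)"
      unfolding Qk_def X by (simp add: Q_gen)
    also have "\<dots> = emeasure Mix X"
      unfolding Mix_def by (simp add: emeasure_bind[OF spD' Qk_meas XY] Dint)
    finally show "emeasure (distr M (Yd d) V) X = emeasure Mix X" .
  qed
  have "(\<integral>\<^sup>+\<omega>. g (V \<omega>) \<partial>M) = (\<integral>\<^sup>+y. g y \<partial>distr M (Yd d) V)"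
    by (simp add: nn_integral_distr V g)
  also have "\<dots> = (\<integral>\<^sup>+y. g y \<partial>Mix)" by (simp add: eqm)
  also have "\<dots> = (\<integral>\<^sup>+i. (\<integral>\<^sup>+y. g y \<partial>Qk i) \<partial>D)"
    unfolding Mix_def by (rule nn_integral_bind[OF g Qk_meas])
  also have "\<dots> = (\<Sum>i\<in>cube d. ennreal (p i) * (\<integral>\<^sup>+y. g y \<partial>Qk i))" by (rule Dint)
  also have "\<dots> = (\<Sum>i\<in>cube d. ennreal (p i) * (\<integral>\<^sup>+w. g (selv d i w) \<partial>PPd d \<nu>s))"
    unfolding Qk_def by (simp add: nn_integral_distr selv_meas g)
  finally show ?thesis .
qed

end

lemma convex_incr:
  fixes \<psi> :: "real \<Rightarrow> real"
  assumes cv: "convex_on UNIV \<psi>" and ab: "\<alpha> \<le> \<beta>" and dl: "0 \<le> \<delta>"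
  shows "\<psi> (\<alpha> + \<delta>) + \<psi> \<beta> \<le> \<psi> \<alpha> + \<psi> (\<beta> + \<delta>)"
proof (cases "\<delta> = 0 \<or> \<alpha> = \<beta>")
  case True then show ?thesis by auto
next
  case False
  define L where "L = \<beta> + \<delta> - \<alpha>"
  have L: "0 < L" using False ab dl unfolding L_def by auto
  define t where "t = \<delta> / L"
  have t0: "0 \<le> t" and t1: "t \<le> 1" using L dl ab unfolding t_def L_def by (auto simp: field_simps)
  have tL: "t * L = \<delta>" using L by (simp add: t_def)
  have e1: "(1 - t) * \<alpha> + t * (\<beta> + \<delta>) = \<alpha> + \<delta>"
  proof -
    have "(1 - t) * \<alpha> + t * (\<beta> + \<delta>) = \<alpha> + t * L" by (simp add: L_def algebra_simps)
    then show ?thesis using tL by simp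
  qed
  have e2: "(1 - (1 - t)) * \<alpha> + (1 - t) * (\<beta> + \<delta>) = \<beta>"
  proof -
    have "(1 - (1 - t)) * \<alpha> + (1 - t) * (\<beta> + \<delta>) = \<beta> + \<delta> - t * L" by (simp add: L_def algebra_simps)
    then show ?thesis using tL by simp
  qed
  have "\<psi> ((1 - t) *\<^sub>R \<alpha> + t *\<^sub>R (\<beta> + \<delta>)) \<le> (1 - t) * \<psi> \<alpha> + t * \<psi> (\<beta> + \<delta>)"
    by (rule convex_onD[OF cv t0 t1]) auto
  then have 1: "\<psi> (\<alpha> + \<delta>) \<le> (1 - t) * \<psi> \<alpha> + t * \<psi> (\<beta> + \<delta>)" using e1 by simp
  have "\<psi> ((1 - (1 - t)) *\<^sub>R \<alpha> + (1 - t) *\<^sub>R (\<beta> + \<delta>)) \<le> (1 - (1 - t)) * \<psi> \<alpha> + (1 - t) * \<psi> (\<beta> + \<delta>)"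
    by (rule convex_onD[OF cv]) (use t0 t1 in auto)
  then have 2: "\<psi> \<beta> \<le> t * \<psi> \<alpha> + (1 - t) * \<psi> (\<beta> + \<delta>)" using e2 by simp
  from 1 2 show ?thesis by (simp add: algebra_simps)
qed

lemma psi_incdiff:
  fixes \<psi> :: "real \<Rightarrow> real"
  assumes mo: "mono \<psi>" and cv: "convex_on UNIV \<psi>"
    and "\<alpha> \<le> \<beta>" "\<alpha> \<le> \<alpha>'" "\<alpha>' - \<alpha> \<le> \<beta>' - \<beta>"
  shows "\<psi> \<alpha>' - \<psi> \<alpha> \<le> \<psi> \<beta>' - \<psi> \<beta>"
proof -
  have "\<psi> (\<alpha> + (\<alpha>' - \<alpha>)) + \<psi> \<beta> \<le> \<psi> \<alpha> + \<psi> (\<beta> + (\<alpha>' - \<alpha>))"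
    by (rule convex_incr[OF cv]) (use assms in auto)
  moreover have "\<psi> (\<beta> + (\<alpha>' - \<alpha>)) \<le> \<psi> \<beta>'" using assms by (intro monoD[OF mo]) auto
  ultimately show ?thesis by simp
qed

definition T :: "nat \<Rightarrow> (nat \<Rightarrow> real) \<Rightarrow> real" where
  "T d x = (\<Sum>l\<in>{1..<d}. if real l \<le> x 0 then max (x l) 0 else 0)"

lemma T_nonneg: "0 \<le> T d x"
  unfolding T_def by (intro sum_nonneg) auto

lemma T_mono:
  assumes "\<And>j. j < d \<Longrightarrow> x j \<le> y j"
  shows "T d x \<le> T d y"
  unfolding T_def
proof (intro sum_mono)
  fix l assume l: "l \<in> {1..<d}"
  then have "x 0 \<le> y 0" "x l \<le> y l" using assms by auto
  then show "(if real l \<le> x 0 then max (x l) 0 else 0) \<le> (if real l \<le> y 0 then max (y l) 0 else 0)"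
    by auto
qed

lemma term0: fixes a0 b0 v v' :: real
  assumes "a0 \<le> b0" "v \<le> v'"
  shows "(if r \<le> b0 then max v 0 else 0) - (if r \<le> a0 then max v 0 else 0)
    \<le> (if r \<le> b0 then max v' 0 else 0) - (if r \<le> a0 then max v' 0 else 0)"
  using assms by auto

lemma term1: fixes u u' a b :: real
  assumes "u \<le> u'" "a \<le> b"
  shows "(if r \<le> u then max b 0 else 0) - (if r \<le> u then max a 0 else 0)
    \<le> (if r \<le> u' then max b 0 else 0) - (if r \<le> u' then max a 0 else 0)"
  using assms by auto

lemma selv_at: "m < d \<Longrightarrow> selv d i w m = selb (i m) (w m)"
  by (simp add: selv_def)

lemma selb_le: "selb 0 w \<le> selb b w"
  by (simp add: selb_def min_def max_def)

lemma cube_01: "x \<in> cube d \<Longrightarrow> m < d \<Longrightarrow> x m = 0 \<or> x m = 1"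
  by (auto simp: cube_def PiE_iff)

lemma selv_mono:
  assumes "x \<in> cube d" "y \<in> cube d" "\<forall>m<d. x m \<le> y m" "m < d"
  shows "selv d x w m \<le> selv d y w m"
proof -
  have "x m = 0 \<or> y m = x m" using cube_01[OF assms(1,4)] cube_01[OF assms(2,4)] assms(3,4) by auto
  then show ?thesis using assms(4) by (auto simp: selv_at selb_le)
qed

lemma T_incdiff:
  assumes x: "x \<in> cube d" and y: "y \<in> cube d" and j: "j < d" and le: "\<forall>m<d. x m \<le> y m"
    and x0: "x j = 0" and y0: "y j = 0"
  shows "T d (selv d (x(j:=1)) w) - T d (selv d x w) \<le> T d (selv d (y(j:=1)) w) - T d (selv d y w)"
proof -
  define tt where "tt l z = (if real l \<le> z 0 then max (z l) 0 else 0)" for l z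
  have TT: "T d z = (\<Sum>l\<in>{1..<d}. tt l z)" for z unfolding T_def tt_def by simp
  have "(\<Sum>l\<in>{1..<d}. tt l (selv d (x(j:=1)) w) - tt l (selv d x w))
      \<le> (\<Sum>l\<in>{1..<d}. tt l (selv d (y(j:=1)) w) - tt l (selv d y w))"
  proof (intro sum_mono)
    fix l assume l: "l \<in> {1..<d}"
    then have l0: "l \<noteq> 0" "l < d" "0 < d" by auto
    show "tt l (selv d (x(j:=1)) w) - tt l (selv d x w) \<le> tt l (selv d (y(j:=1)) w) - tt l (selv d y w)"
    proof (cases "j = 0")
      case True
      have h1: "selb 0 (w 0) \<le> selb 1 (w 0)" by (rule selb_le)
      have h2: "selb (x l) (w l) \<le> selb (y l) (w l)"
        using selv_mono[OF x y le l0(2), of w] l0 by (simp add: selv_at)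
      have eqs: "selv d (x(j:=1)) w 0 = selb 1 (w 0)" "selv d x w 0 = selb 0 (w 0)"
        "selv d (y(j:=1)) w 0 = selb 1 (w 0)" "selv d y w 0 = selb 0 (w 0)"
        "selv d (x(j:=1)) w l = selb (x l) (w l)" "selv d x w l = selb (x l) (w l)"
        "selv d (y(j:=1)) w l = selb (y l) (w l)" "selv d y w l = selb (y l) (w l)"
        using True l0 x0 y0 by (simp_all add: selv_at)
      show ?thesis unfolding tt_def eqs by (rule term0[OF h1 h2])
    next
      case False
      show ?thesis
      proof (cases "l = j")
        case True
        have h1: "selb (x 0) (w 0) \<le> selb (y 0) (w 0)"
          using selv_mono[OF x y le l0(3), of w] l0 by (simp add: selv_at)
        have h2: "selb 0 (w l) \<le> selb 1 (w l)" by (rule selb_le)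
        have eqs: "selv d (x(j:=1)) w 0 = selb (x 0) (w 0)" "selv d x w 0 = selb (x 0) (w 0)"
          "selv d (y(j:=1)) w 0 = selb (y 0) (w 0)" "selv d y w 0 = selb (y 0) (w 0)"
          "selv d (x(j:=1)) w l = selb 1 (w l)" "selv d x w l = selb 0 (w l)"
          "selv d (y(j:=1)) w l = selb 1 (w l)" "selv d y w l = selb 0 (w l)"
          using True False l0 x0 y0 by (simp_all add: selv_at)
        show ?thesis unfolding tt_def eqs by (rule term1[OF h1 h2])
      next
        case False2: False
        show ?thesis using False False2 l0 j unfolding tt_def by (simp add: selv_at)
      qed
    qed
  qed
  then show ?thesis unfolding TT by (simp add: sum_subtractf)
qed

definition gT :: "(real \<Rightarrow> real) \<Rightarrow> nat \<Rightarrow> (nat \<Rightarrow> real) \<Rightarrow> ennreal" where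
  "gT \<psi> d x = ennreal (\<psi> (T d x))"

lemma T_meas: "T d \<in> borel_measurable (Yd d)"
proof -
  have c: "(\<lambda>x. x m) \<in> borel_measurable (Yd d)" if "m < d" for m
    unfolding Yd_def using that by (intro measurable_component_singleton) auto
  show ?thesis unfolding T_def
  proof (intro borel_measurable_sum)
    fix l assume l: "l \<in> {1..<d}"
    have [measurable]: "(\<lambda>x. x 0) \<in> borel_measurable (Yd d)" "(\<lambda>x. x l) \<in> borel_measurable (Yd d)"
      using l by (auto intro: c)
    show "(\<lambda>x. if real l \<le> x 0 then max (x l) 0 else 0) \<in> borel_measurable (Yd d)" by measurable
  qed
qed

lemma gT_meas: "mono \<psi> \<Longrightarrow> gT \<psi> d \<in> borel_measurable (Yd d)"
  unfolding gT_def
  by (intro measurable_compose[OF T_meas] measurable_compose[OF _ measurable_ennreal] borel_measurable_mono)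

lemma cube_upd: "x \<in> cube d \<Longrightarrow> j < d \<Longrightarrow> x(j:=1) \<in> cube d"
  by (auto simp: cube_def PiE_iff extensional_def)

lemma psi_nonneg: "mono \<psi> \<Longrightarrow> \<psi> 0 = 0 \<Longrightarrow> 0 \<le> t \<Longrightarrow> 0 \<le> (\<psi> t :: real)"
  by (metis monoD)

context nus
begin

definition hK :: "(real \<Rightarrow> real) \<Rightarrow> nat \<Rightarrow> (nat \<Rightarrow> nat) \<Rightarrow> ennreal" where
  "hK \<psi> d i = (\<integral>\<^sup>+w. gT \<psi> d (selv d i w) \<partial>PPd d \<nu>s)"

lemma gTs_meas: "mono \<psi> \<Longrightarrow> (\<lambda>w. gT \<psi> d (selv d i w)) \<in> borel_measurable (PPd d \<nu>s)"
  by (intro measurable_compose[OF selv_meas gT_meas])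

lemma h_mono:
  assumes mo: "mono \<psi>" and x: "x \<in> cube d" and y: "y \<in> cube d" and le: "\<forall>m<d. x m \<le> y m"
  shows "hK \<psi> d x \<le> hK \<psi> d y"
  unfolding hK_def gT_def
  by (intro nn_integral_mono ennreal_leI monoD[OF mo] T_mono selv_mono[OF x y le])

lemma h_incdiff:
  assumes mo: "mono \<psi>" and cv: "convex_on UNIV \<psi>" and p0: "\<psi> 0 = 0"
    and x: "x \<in> cube d" and y: "y \<in> cube d" and j: "j < d" and le: "\<forall>m<d. x m \<le> y m"
    and x0: "x j = 0" and y0: "y j = 0"
  shows "hK \<psi> d (x(j:=1)) + hK \<psi> d y \<le> hK \<psi> d (y(j:=1)) + hK \<psi> d x"
proof -
  have x': "x(j:=1) \<in> cube d" and y': "y(j:=1) \<in> cube d" using cube_upd x y j by auto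
  have "hK \<psi> d (x(j:=1)) + hK \<psi> d y = (\<integral>\<^sup>+w. gT \<psi> d (selv d (x(j:=1)) w) + gT \<psi> d (selv d y w) \<partial>PPd d \<nu>s)"
    unfolding hK_def by (rule nn_integral_add[symmetric]) (auto intro: gTs_meas[OF mo])
  also have "\<dots> \<le> (\<integral>\<^sup>+w. gT \<psi> d (selv d (y(j:=1)) w) + gT \<psi> d (selv d x w) \<partial>PPd d \<nu>s)"
  proof (intro nn_integral_mono)
    fix w
    define \<alpha> where "\<alpha> = T d (selv d x w)"
    define \<beta> where "\<beta> = T d (selv d y w)"
    define \<alpha>' where "\<alpha>' = T d (selv d (x(j:=1)) w)"
    define \<beta>' where "\<beta>' = T d (selv d (y(j:=1)) w)"
    have lex: "\<forall>m<d. x m \<le> (x(j:=1)) m"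
    proof (intro allI impI)
      fix m assume "m < d"
      then have "x m = 0 \<or> x m = 1" by (rule cube_01[OF x])
      then show "x m \<le> (x(j:=1)) m" by auto
    qed
    have "\<alpha> \<le> \<beta>" unfolding \<alpha>_def \<beta>_def by (intro T_mono selv_mono[OF x y le])
    moreover have "\<alpha> \<le> \<alpha>'" unfolding \<alpha>_def \<alpha>'_def by (intro T_mono selv_mono[OF x x' lex])
    moreover have "\<alpha>' - \<alpha> \<le> \<beta>' - \<beta>" unfolding \<alpha>_def \<beta>_def \<alpha>'_def \<beta>'_def
      by (rule T_incdiff[OF x y j le x0 y0])
    ultimately have "\<psi> \<alpha>' - \<psi> \<alpha> \<le> \<psi> \<beta>' - \<psi> \<beta>" by (rule psi_incdiff[OF mo cv])
    moreover have nn: "0 \<le> \<psi> \<alpha>" "0 \<le> \<psi> \<beta>" "0 \<le> \<psi> \<alpha>'" "0 \<le> \<psi> \<beta>'"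
      unfolding \<alpha>_def \<beta>_def \<alpha>'_def \<beta>'_def by (auto intro!: psi_nonneg[OF mo p0] T_nonneg)
    ultimately have "\<psi> \<alpha>' + \<psi> \<beta> \<le> \<psi> \<beta>' + \<psi> \<alpha>" by simp
    then have "ennreal (\<psi> \<alpha>' + \<psi> \<beta>) \<le> ennreal (\<psi> \<beta>' + \<psi> \<alpha>)" by (rule ennreal_leI)
    moreover have "ennreal (\<psi> \<alpha>' + \<psi> \<beta>) = ennreal (\<psi> \<alpha>') + ennreal (\<psi> \<beta>)"
      by (rule ennreal_plus) (use nn in auto)
    moreover have "ennreal (\<psi> \<beta>' + \<psi> \<alpha>) = ennreal (\<psi> \<beta>') + ennreal (\<psi> \<alpha>)"
      by (rule ennreal_plus) (use nn in auto)
    ultimately have "ennreal (\<psi> \<alpha>') + ennreal (\<psi> \<beta>) \<le> ennreal (\<psi> \<beta>') + ennreal (\<psi> \<alpha>)"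
      by simp
    then show "gT \<psi> d (selv d (x(j:=1)) w) + gT \<psi> d (selv d y w) \<le> gT \<psi> d (selv d (y(j:=1)) w) + gT \<psi> d (selv d x w)"
      unfolding gT_def \<alpha>_def \<beta>_def \<alpha>'_def \<beta>'_def .
  qed
  also have "\<dots> = hK \<psi> d (y(j:=1)) + hK \<psi> d x"
    unfolding hK_def by (rule nn_integral_add) (auto intro: gTs_meas[OF mo])
  finally show ?thesis .
qed

lemma main_ineq:
  assumes mo: "mono \<psi>" and cv: "convex_on UNIV \<psi>" and p0: "\<psi> 0 = 0" and d: "0 < d"
    and val: "fgm_valid d \<theta>" and val': "fgm_valid d \<theta>'"
    and c0: "fgm_pmf d \<theta>' (cz d) = 1/2" and c1: "fgm_pmf d \<theta>' (co d) = 1/2"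
    and fin: "hK \<psi> d (co d) \<noteq> \<infinity>"
  shows "(\<Sum>i\<in>cube d. ennreal (fgm_pmf d \<theta> i) * hK \<psi> d i)
       \<le> (\<Sum>i\<in>cube d. ennreal (fgm_pmf d \<theta>' i) * hK \<psi> d i)"
proof -
  define hr where "hr i = enn2real (hK \<psi> d i)" for i
  have hfin: "hK \<psi> d i = ennreal (hr i)" if i: "i \<in> cube d" for i
  proof -
    have "hK \<psi> d i \<le> hK \<psi> d (co d)"
    proof (intro h_mono[OF mo i co_cube] allI impI)
      fix m assume "m < d"
      then have "i m = 0 \<or> i m = 1" by (rule cube_01[OF i])
      then show "i m \<le> co d m" using \<open>m < d\<close> by (auto simp: co_def)
    qed
    then have "hK \<psi> d i < \<infinity>" using fin by (metis infinity_ennreal_def less_top top.not_eq_extremum order.strict_trans1)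
    then show ?thesis unfolding hr_def by (simp add: ennreal_enn2real_if less_top)
  qed
  have hr0: "0 \<le> hr i" for i unfolding hr_def by simp
  have incd: "hr (x(j:=1)) - hr x \<le> hr (y(j:=1)) - hr y"
    if x: "x \<in> cube d" and y: "y \<in> cube d" and j: "j < d" and le: "\<forall>m<d. x m \<le> y m"
      and x0: "x j = 0" and y0: "y j = 0" for x y j
  proof -
    have "ennreal (hr (x(j:=1))) + ennreal (hr y) \<le> ennreal (hr (y(j:=1))) + ennreal (hr x)"
      using h_incdiff[OF mo cv p0 x y j le x0 y0] hfin[OF cube_upd[OF x j]] hfin[OF cube_upd[OF y j]]
        hfin[OF x] hfin[OF y] by simp
    then have "ennreal (hr (x(j:=1)) + hr y) \<le> ennreal (hr (y(j:=1)) + hr x)"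
      by (simp add: ennreal_plus hr0)
    then have "hr (x(j:=1)) + hr y \<le> hr (y(j:=1)) + hr x"
      by (metis ennreal_le_iff add_nonneg_nonneg hr0)
    then show ?thesis by simp
  qed
  have "(\<Sum>i\<in>cube d. fgm_pmf d \<theta> i * hr i) \<le> (hr (cz d) + hr (co d)) / 2"
    by (rule supermod_bound[OF pmf_nonneg[OF val] pmf_marg pmf_sum1 incd])
  have L: "(\<Sum>i\<in>cube d. ennreal (fgm_pmf d \<theta> i) * hK \<psi> d i) = ennreal (\<Sum>i\<in>cube d. fgm_pmf d \<theta> i * hr i)"
  proof -
    have "(\<Sum>i\<in>cube d. ennreal (fgm_pmf d \<theta> i) * hK \<psi> d i) = (\<Sum>i\<in>cube d. ennreal (fgm_pmf d \<theta> i * hr i))"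
      by (intro sum.cong refl) (simp add: hfin ennreal_mult pmf_nonneg[OF val] hr0)
    also have "\<dots> = ennreal (\<Sum>i\<in>cube d. fgm_pmf d \<theta> i * hr i)"
      by (rule sum_ennreal) (simp add: pmf_nonneg[OF val] hr0)
    finally show ?thesis .
  qed
  have R: "(\<Sum>i\<in>cube d. ennreal (fgm_pmf d \<theta>' i) * hK \<psi> d i) = ennreal ((hr (cz d) + hr (co d)) / 2)"
  proof -
    have "(\<Sum>i\<in>cube d. ennreal (fgm_pmf d \<theta>' i) * hK \<psi> d i)
      = ennreal (fgm_pmf d \<theta>' (cz d)) * hK \<psi> d (cz d) + ennreal (fgm_pmf d \<theta>' (co d)) * hK \<psi> d (co d)"
      by (rule como_sum[OF d]) (simp add: como_zero[OF d val' c0 c1])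
    also have "\<dots> = ennreal (1/2 * hr (cz d) + 1/2 * hr (co d))"
    proof -
      have e1: "ennreal (1/2 * hr (cz d)) = ennreal (1/2) * ennreal (hr (cz d))"
        by (rule ennreal_mult) (simp_all add: hr0)
      have e2: "ennreal (1/2 * hr (co d)) = ennreal (1/2) * ennreal (hr (co d))"
        by (rule ennreal_mult) (simp_all add: hr0)
      have e3: "ennreal (1/2 * hr (cz d) + 1/2 * hr (co d)) = ennreal (1/2 * hr (cz d)) + ennreal (1/2 * hr (co d))"
        by (rule ennreal_plus) (simp_all add: hr0)
      show ?thesis unfolding e3 e1 e2 c0 c1 hfin[OF cz_cube] hfin[OF co_cube] ..
    qed
    finally show ?thesis by (simp add: add_divide_distrib)
  qed
  show ?thesis unfolding L R
    by (intro ennreal_leI) fact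
qed

end

definition SK :: "nat \<Rightarrow> ('a \<Rightarrow> nat) \<Rightarrow> (nat \<Rightarrow> 'a \<Rightarrow> real) \<Rightarrow> 'a \<Rightarrow> real" where
  "SK K N X \<omega> = (\<Sum>j\<in>{1..K}. if j \<le> N \<omega> then max (X j \<omega>) 0 else 0)"

lemma SK_T: "T (Suc K) (\<lambda>j\<in>{..<Suc K}. if j = 0 then real (N \<omega>) else X j \<omega>) = SK K N X \<omega>"
  unfolding T_def SK_def
proof (rule sum.cong)
  show "{1..<Suc K} = {1..K}" by auto
next
  fix l assume "l \<in> {1..K}"
  then show "(if real l \<le> (\<lambda>j\<in>{..<Suc K}. if j = 0 then real (N \<omega>) else X j \<omega>) 0
         then max ((\<lambda>j\<in>{..<Suc K}. if j = 0 then real (N \<omega>) else X j \<omega>) l) 0 else 0) =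
        (if l \<le> N \<omega> then max (X l \<omega>) 0 else 0)" by auto
qed

context nus
begin

lemma model_K:
  fixes M :: "'a measure" and N :: "'a \<Rightarrow> nat" and X :: "nat \<Rightarrow> 'a \<Rightarrow> real"
  assumes crm: "crm_fgm M N X FN FX \<theta>" and K: "1 \<le> K" and bs: "below_sup_support M N K"
    and cdfN: "\<And>t. measure (\<nu>s 0) {..t} = FN t"
    and cdfX: "\<And>j x. 1 \<le> j \<Longrightarrow> measure (\<nu>s j) {..x} = FX x"
    and mo: "mono \<psi>"
  shows "(\<integral>\<^sup>+\<omega>. ennreal (\<psi> (SK K N X \<omega>)) \<partial>M)
       = (\<Sum>i\<in>cube (Suc K). ennreal (fgm_pmf (Suc K) \<theta> i) * hK \<psi> (Suc K) i)"
proof -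
  have P: "prob_space M" and Nm: "N \<in> measurable M (count_space UNIV)"
    and Xm: "\<And>j. 1 \<le> j \<Longrightarrow> X j \<in> borel_measurable M"
    using crm unfolding crm_fgm_def by auto
  have val: "fgm_valid (Suc K) \<theta>"
    and cop: "\<And>t x. measure M {\<omega>\<in>space M. real (N \<omega>) \<le> t \<and> (\<forall>j\<in>{1..K}. X j \<omega> \<le> x j)}
           = fgm_copula (Suc K) \<theta> (\<lambda>m. if m = 0 then FN t else FX (x m))"
    using crm K bs unfolding crm_fgm_def by auto
  define d where "d = Suc K"
  define V where "V \<omega> = (\<lambda>j\<in>{..<d}. if j = 0 then real (N \<omega>) else X j \<omega>)" for \<omega>
  have Vm: "V \<in> measurable M (Yd d)"
    unfolding V_def Yd_def
  proof (intro measurable_restrict)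
    fix j assume "j \<in> {..<d}"
    show "(\<lambda>\<omega>. if j = 0 then real (N \<omega>) else X j \<omega>) \<in> borel_measurable M"
    proof (cases "j = 0")
      case True
      have "(\<lambda>\<omega>. real (N \<omega>)) \<in> borel_measurable M"
        by (rule measurable_compose[OF Nm]) simp
      then show ?thesis using True by simp
    next
      case False
      then show ?thesis using Xm[of j] by simp
    qed
  qed
  have cdf: "measure M {\<omega>\<in>space M. \<forall>j<d. V \<omega> j \<le> a j}
      = (\<Sum>i\<in>cube d. fgm_pmf d \<theta> i * (\<Prod>j<d. Gf (i j) (measure (\<nu>s j) {..a j})))" for a
  proof -
    have "{\<omega>\<in>space M. \<forall>j<d. V \<omega> j \<le> a j} = {\<omega>\<in>space M. real (N \<omega>) \<le> a 0 \<and> (\<forall>j\<in>{1..K}. X j \<omega> \<le> a j)}"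
    proof (rule Collect_cong)
      fix \<omega>
      have "(\<forall>j<d. V \<omega> j \<le> a j) \<longleftrightarrow> (real (N \<omega>) \<le> a 0 \<and> (\<forall>j\<in>{1..K}. X j \<omega> \<le> a j))"
      proof
        assume A: "\<forall>j<d. V \<omega> j \<le> a j"
        have "real (N \<omega>) \<le> a 0" using A[rule_format, of 0] by (simp add: V_def d_def)
        moreover have "X j \<omega> \<le> a j" if "j \<in> {1..K}" for j
          using A[rule_format, of j] that by (simp add: V_def d_def)
        ultimately show "real (N \<omega>) \<le> a 0 \<and> (\<forall>j\<in>{1..K}. X j \<omega> \<le> a j)" by auto
      next
        assume A: "real (N \<omega>) \<le> a 0 \<and> (\<forall>j\<in>{1..K}. X j \<omega> \<le> a j)"
        show "\<forall>j<d. V \<omega> j \<le> a j"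
        proof (intro allI impI)
          fix j assume "j < d"
          then show "V \<omega> j \<le> a j" using A by (cases "j = 0") (auto simp: V_def d_def)
        qed
      qed
      then show "(\<omega> \<in> space M \<and> (\<forall>j<d. V \<omega> j \<le> a j)) = (\<omega> \<in> space M \<and> real (N \<omega>) \<le> a 0 \<and> (\<forall>j\<in>{1..K}. X j \<omega> \<le> a j))"
        by simp
    qed
    then have "measure M {\<omega>\<in>space M. \<forall>j<d. V \<omega> j \<le> a j} = fgm_copula d \<theta> (\<lambda>m. if m = 0 then FN (a 0) else FX (a m))"
      using cop[of "a 0" a] by (simp add: d_def)
    also have "\<dots> = (\<Sum>i\<in>cube d. fgm_pmf d \<theta> i * (\<Prod>m<d. Gf (i m) (if m = 0 then FN (a 0) else FX (a m))))"
      by (rule copula_mix[symmetric])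
    also have "\<dots> = (\<Sum>i\<in>cube d. fgm_pmf d \<theta> i * (\<Prod>j<d. Gf (i j) (measure (\<nu>s j) {..a j})))"
      by (intro sum.cong refl arg_cong2[where f="(*)"] prod.cong) (auto simp: cdfN cdfX)
    finally show ?thesis .
  qed
  have "(\<integral>\<^sup>+\<omega>. gT \<psi> d (V \<omega>) \<partial>M) = (\<Sum>i\<in>cube d. ennreal (fgm_pmf d \<theta> i) * (\<integral>\<^sup>+w. gT \<psi> d (selv d i w) \<partial>PPd d \<nu>s))"
    by (rule law[OF P Vm pmf_nonneg[OF val[folded d_def]] cdf gT_meas[OF mo]])
  moreover have "gT \<psi> d (V \<omega>) = ennreal (\<psi> (SK K N X \<omega>))" for \<omega>
    unfolding gT_def V_def d_def SK_T ..
  ultimately show ?thesis by (simp add: hK_def d_def)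
qed

end

lemma pmf_cz: "fgm_pmf d \<theta> (cz d) = fgm_pmf d \<theta> (\<lambda>_. 0)"
proof -
  have key: "(\<Sum>j\<in>J. cz d j) = 0" if "J \<in> fgm_index d" for J
    using fgm_index_sub[OF that] by (intro sum.neutral) (auto simp: cz_def)
  show ?thesis unfolding fgm_pmf_def by (simp add: key cong: sum.cong)
qed

lemma pmf_co: "fgm_pmf d \<theta> (co d) = fgm_pmf d \<theta> (\<lambda>_. 1)"
proof -
  have key: "(\<Sum>j\<in>J. co d j) = card J" if "J \<in> fgm_index d" for J
  proof -
    have "(\<Sum>j\<in>J. co d j) = (\<Sum>j\<in>J. 1)"
      using fgm_index_sub[OF that] by (intro sum.cong) (auto simp: co_def)
    then show ?thesis by simp
  qed
  show ?thesis unfolding fgm_pmf_def by (simp add: key cong: sum.cong)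
qed

lemma crm_basic:
  assumes "crm_fgm M N X FN FX \<theta>"
  shows "prob_space M" "N \<in> measurable M (count_space UNIV)"
    "\<And>j. 1 \<le> j \<Longrightarrow> X j \<in> borel_measurable M"
    "\<And>j \<omega>. 1 \<le> j \<Longrightarrow> \<omega> \<in> space M \<Longrightarrow> 0 < X j \<omega>"
    "\<And>t. measure M {\<omega>\<in>space M. real (N \<omega>) \<le> t} = FN t"
    "\<And>j x. 1 \<le> j \<Longrightarrow> measure M {\<omega>\<in>space M. X j \<omega> \<le> x} = FX x"
  using assms unfolding crm_fgm_def by auto

lemma N_sets:
  assumes "N \<in> measurable M (count_space UNIV)"
  shows "{\<omega>\<in>space M. P (N \<omega>)} \<in> sets M"
proof -
  have "N -` {n. P n} \<inter> space M \<in> sets M" by (rule measurable_sets[OF assms]) simp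
  moreover have "N -` {n. P n} \<inter> space M = {\<omega>\<in>space M. P (N \<omega>)}" by auto
  ultimately show ?thesis by simp
qed

lemma probN:
  assumes crm: "crm_fgm M N X FN FX \<theta>"
  shows "measure M {\<omega>\<in>space M. N \<omega> = n} = FN (real n) - FN (real n - 1)"
proof -
  interpret prob_space M using crm_basic[OF crm] by simp
  have Nm: "N \<in> measurable M (count_space UNIV)" using crm_basic[OF crm] by simp
  have e: "{\<omega>\<in>space M. N \<omega> = n} = {\<omega>\<in>space M. real (N \<omega>) \<le> real n} - {\<omega>\<in>space M. real (N \<omega>) \<le> real n - 1}"
    by auto
  have "measure M {\<omega>\<in>space M. N \<omega> = n} = measure M {\<omega>\<in>space M. real (N \<omega>) \<le> real n} - measure M {\<omega>\<in>space M. real (N \<omega>) \<le> real n - 1}"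
    unfolding e by (rule finite_measure_Diff) (auto intro: N_sets[OF Nm])
  then show ?thesis by (simp only: crm_basic(5)[OF crm])
qed

lemma bss_eq:
  assumes "crm_fgm M N X FN FX \<theta>" "crm_fgm M' N' X' FN FX \<theta>'"
  shows "below_sup_support M N K \<longleftrightarrow> below_sup_support M' N' K"
  unfolding below_sup_support_def using probN[OF assms(1)] probN[OF assms(2)] by simp

lemma AE_small:
  assumes crm: "crm_fgm M N X FN FX \<theta>" and nb: "\<not> below_sup_support M N (Suc k)"
  shows "AE \<omega> in M. N \<omega> \<le> k"
proof -
  interpret prob_space M using crm_basic[OF crm] by simp
  have Nm: "N \<in> measurable M (count_space UNIV)" using crm_basic[OF crm] by simp
  have "AE \<omega> in M. Suc k \<le> n \<longrightarrow> N \<omega> \<noteq> n" for n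
  proof (cases "Suc k \<le> n")
    case True
    then have "measure M {\<omega>\<in>space M. N \<omega> = n} = 0"
      using nb unfolding below_sup_support_def by (metis measure_nonneg not_le order.not_eq_order_implies_strict)
    then have "{\<omega>\<in>space M. N \<omega> = n} \<in> null_sets M"
      by (intro null_setsI N_sets[OF Nm]) (simp add: emeasure_eq_measure)
    then show ?thesis by (rule AE_I') auto
  qed simp
  then have "AE \<omega> in M. \<forall>n. Suc k \<le> n \<longrightarrow> N \<omega> \<noteq> n" by (simp add: AE_all_countable)
  then show ?thesis by eventually_elim (metis not_less_eq_eq order_refl)
qed

lemma SK_alt: "SK K N X \<omega> = (\<Sum>j\<in>{1..min K (N \<omega>)}. max (X j \<omega>) 0)"
proof -
  have "SK K N X \<omega> = (\<Sum>j\<in>{j\<in>{1..K}. j \<le> N \<omega>}. max (X j \<omega>) 0)"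
    unfolding SK_def by (rule sum.inter_filter[symmetric]) simp
  also have "{j\<in>{1..K}. j \<le> N \<omega>} = {1..min K (N \<omega>)}" by auto
  finally show ?thesis .
qed

lemma SK_0: "SK 0 N X \<omega> = 0" by (simp add: SK_def)

lemma SK_mono: "K \<le> K' \<Longrightarrow> SK K N X \<omega> \<le> SK K' N X \<omega>"
  unfolding SK_alt by (intro sum_mono2) auto

lemma SK_stable: "N \<omega> \<le> K \<Longrightarrow> SK K N X \<omega> = SK (N \<omega>) N X \<omega>"
  unfolding SK_alt by (simp add: min_absorb2)

lemma SK_agg: "(\<And>j. 1 \<le> j \<Longrightarrow> 0 < X j \<omega>) \<Longrightarrow> SK (N \<omega>) N X \<omega> = agg N X \<omega>"
  unfolding SK_alt agg_def min.idem
proof (intro sum.cong refl)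
  fix j assume pos: "\<And>j. 1 \<le> j \<Longrightarrow> 0 < X j \<omega>" and "j \<in> {1..N \<omega>}"
  then have "0 < X j \<omega>" by auto
  then show "max (X j \<omega>) 0 = X j \<omega>" by simp
qed

lemma SK_le_agg: "(\<And>j. 1 \<le> j \<Longrightarrow> 0 < X j \<omega>) \<Longrightarrow> SK K N X \<omega> \<le> agg N X \<omega>"
proof -
  assume pos: "\<And>j. 1 \<le> j \<Longrightarrow> 0 < X j \<omega>"
  have "SK K N X \<omega> \<le> SK (max K (N \<omega>)) N X \<omega>" by (rule SK_mono) simp
  also have "\<dots> = SK (N \<omega>) N X \<omega>" by (rule SK_stable) simp
  also have "\<dots> = agg N X \<omega>" by (rule SK_agg) (rule pos)
  finally show ?thesis .
qed

lemma SK_nonneg: "0 \<le> SK K N X \<omega>"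
  unfolding SK_def by (intro sum_nonneg) auto

lemma SK_Suc: "N \<omega> \<le> k \<Longrightarrow> SK (Suc k) N X \<omega> = SK k N X \<omega>"
  using SK_stable[of N \<omega> k X] SK_stable[of N \<omega> "Suc k" X] by simp

lemma SK_meas:
  assumes Nm: "N \<in> measurable M (count_space UNIV)" and Xm: "\<And>j. 1 \<le> j \<Longrightarrow> X j \<in> borel_measurable M"
  shows "SK K N X \<in> borel_measurable M"
  unfolding SK_def
proof (intro borel_measurable_sum)
  fix j assume j: "j \<in> {1..K}"
  have [measurable]: "X j \<in> borel_measurable M" using j Xm by auto
  have [measurable]: "(\<lambda>\<omega>. if j \<le> N \<omega> then 1 else 0 :: real) \<in> borel_measurable M"
    by (rule measurable_compose[OF Nm, where g="\<lambda>n. if j \<le> n then 1 else 0"]) simp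
  have "(\<lambda>\<omega>. (if j \<le> N \<omega> then 1 else 0) * max (X j \<omega>) 0) \<in> borel_measurable M" by measurable
  moreover have "(\<lambda>\<omega>. if j \<le> N \<omega> then max (X j \<omega>) 0 else 0) = (\<lambda>\<omega>. (if j \<le> N \<omega> then 1 else 0) * max (X j \<omega>) 0)"
    by auto
  ultimately show "(\<lambda>\<omega>. if j \<le> N \<omega> then max (X j \<omega>) 0 else 0) \<in> borel_measurable M" by simp
qed

lemma step_K:
  fixes M :: "'a measure" and N :: "'a \<Rightarrow> nat" and X :: "nat \<Rightarrow> 'a \<Rightarrow> real"
    and M' :: "'b measure" and N' :: "'b \<Rightarrow> nat" and X' :: "nat \<Rightarrow> 'b \<Rightarrow> real"
  assumes crm: "crm_fgm M N X FN FX \<theta>" and crm': "crm_fgm M' N' X' FN FX \<theta>'"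
    and como: "fgm_comonotone M' N' \<theta>'"
    and nu: "nus \<nu>s"
    and cdfN: "\<And>t. measure (\<nu>s 0) {..t} = FN t"
    and cdfX: "\<And>j x. 1 \<le> j \<Longrightarrow> measure (\<nu>s j) {..x} = FX x"
    and mo: "mono \<psi>" and cv: "convex_on UNIV \<psi>" and p0: "\<psi> 0 = 0"
    and fin': "(\<integral>\<^sup>+\<omega>. ennreal (\<psi> (agg N' X' \<omega>)) \<partial>M') \<noteq> \<infinity>"
  shows "(\<integral>\<^sup>+\<omega>. ennreal (\<psi> (SK K N X \<omega>)) \<partial>M) \<le> (\<integral>\<^sup>+\<omega>. ennreal (\<psi> (SK K N' X' \<omega>)) \<partial>M')"
proof (induction K)
  case 0
  then show ?case by (simp add: SK_0 p0)
next
  case (Suc k)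
  interpret nus \<nu>s by (rule nu)
  show ?case
  proof (cases "below_sup_support M N (Suc k)")
    case True
    have True': "below_sup_support M' N' (Suc k)" using True bss_eq[OF crm crm'] by simp
    define d where "d = Suc (Suc k)"
    have d: "0 < d" by (simp add: d_def)
    have val: "fgm_valid d \<theta>" using crm True unfolding crm_fgm_def d_def by auto
    have val': "fgm_valid d \<theta>'" using crm' True' unfolding crm_fgm_def d_def by auto
    have c0: "fgm_pmf d \<theta>' (cz d) = 1/2" and c1: "fgm_pmf d \<theta>' (co d) = 1/2"
      using como True' unfolding fgm_comonotone_def d_def by (auto simp: pmf_cz pmf_co)
    have L: "(\<integral>\<^sup>+\<omega>. ennreal (\<psi> (SK (Suc k) N X \<omega>)) \<partial>M) = (\<Sum>i\<in>cube d. ennreal (fgm_pmf d \<theta> i) * hK \<psi> d i)"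
      unfolding d_def by (rule model_K[OF crm _ True cdfN cdfX mo]) auto
    have R: "(\<integral>\<^sup>+\<omega>. ennreal (\<psi> (SK (Suc k) N' X' \<omega>)) \<partial>M') = (\<Sum>i\<in>cube d. ennreal (fgm_pmf d \<theta>' i) * hK \<psi> d i)"
      unfolding d_def by (rule model_K[OF crm' _ True' cdfN cdfX mo]) auto
    have fin: "hK \<psi> d (co d) \<noteq> \<infinity>"
    proof
      assume inf: "hK \<psi> d (co d) = \<infinity>"
      have "(\<Sum>i\<in>cube d. ennreal (fgm_pmf d \<theta>' i) * hK \<psi> d i)
          = ennreal (fgm_pmf d \<theta>' (cz d)) * hK \<psi> d (cz d) + ennreal (fgm_pmf d \<theta>' (co d)) * hK \<psi> d (co d)"
        by (rule como_sum[OF d]) (simp add: como_zero[OF d val' c0 c1])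
      also have "\<dots> = \<infinity>" using inf c1 by (simp add: ennreal_mult_eq_top_iff)
      finally have "(\<integral>\<^sup>+\<omega>. ennreal (\<psi> (SK (Suc k) N' X' \<omega>)) \<partial>M') = \<infinity>" using R by simp
      moreover have "(\<integral>\<^sup>+\<omega>. ennreal (\<psi> (SK (Suc k) N' X' \<omega>)) \<partial>M') \<le> (\<integral>\<^sup>+\<omega>. ennreal (\<psi> (agg N' X' \<omega>)) \<partial>M')"
      proof (intro nn_integral_mono ennreal_leI monoD[OF mo] SK_le_agg)
        fix \<omega> and j :: nat assume "\<omega> \<in> space M'" "1 \<le> j"
        then show "0 < X' j \<omega>" using crm_basic(4)[OF crm'] by blast
      qed
      ultimately show False using fin' by (simp add: top_unique)
    qed
    show ?thesis unfolding L R by (rule main_ineq[OF mo cv p0 d val val' c0 c1 fin])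
  next
    case False
    have False': "\<not> below_sup_support M' N' (Suc k)" using False bss_eq[OF crm crm'] by simp
    have "(\<integral>\<^sup>+\<omega>. ennreal (\<psi> (SK (Suc k) N X \<omega>)) \<partial>M) = (\<integral>\<^sup>+\<omega>. ennreal (\<psi> (SK k N X \<omega>)) \<partial>M)"
      using AE_small[OF crm False] by (intro nn_integral_cong_AE) (auto elim!: AE_mp simp: SK_Suc)
    also have "\<dots> \<le> (\<integral>\<^sup>+\<omega>. ennreal (\<psi> (SK k N' X' \<omega>)) \<partial>M')" by (rule Suc.IH)
    also have "\<dots> = (\<integral>\<^sup>+\<omega>. ennreal (\<psi> (SK (Suc k) N' X' \<omega>)) \<partial>M')"
      using AE_small[OF crm' False'] by (intro nn_integral_cong_AE) (auto elim!: AE_mp simp: SK_Suc)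
    finally show ?thesis .
  qed
qed


theorem mainTheorem16:
  fixes M :: "'a measure" and N :: "'a \<Rightarrow> nat" and X :: "nat \<Rightarrow> 'a \<Rightarrow> real"
    and M' :: "'b measure" and N' :: "'b \<Rightarrow> nat" and X' :: "nat \<Rightarrow> 'b \<Rightarrow> real"
    and FN FX :: "real \<Rightarrow> real"
  assumes crm: "\<exists>\<theta>. crm_fgm M N X FN FX \<theta>"
    and crm_como: "\<exists>\<theta>'. crm_fgm M' N' X' FN FX \<theta>' \<and> fgm_comonotone M' N' \<theta>'"
    and EN: "integrable M (\<lambda>\<omega>. real (N \<omega>))" and EX: "integrable M (X 1)"
    and EN': "integrable M' (\<lambda>\<omega>. real (N' \<omega>))" and EX': "integrable M' (X' 1)"
  shows "\<forall>\<phi> :: real \<Rightarrow> real. mono \<phi> \<and> convex_on UNIV \<phi> \<and>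
           integrable M (\<lambda>\<omega>. \<phi> (agg N X \<omega>)) \<and> integrable M' (\<lambda>\<omega>. \<phi> (agg N' X' \<omega>)) \<longrightarrow>
           (\<integral>\<omega>. \<phi> (agg N X \<omega>) \<partial>M) \<le> (\<integral>\<omega>. \<phi> (agg N' X' \<omega>) \<partial>M')"
proof (intro allI impI, elim conjE)
  fix \<phi> :: "real \<Rightarrow> real"
  assume mo\<phi>: "mono \<phi>" and cv\<phi>: "convex_on UNIV \<phi>"
    and I1: "integrable M (\<lambda>\<omega>. \<phi> (agg N X \<omega>))" and I2: "integrable M' (\<lambda>\<omega>. \<phi> (agg N' X' \<omega>))"
  obtain \<theta> where c1: "crm_fgm M N X FN FX \<theta>" using crm by blast
  obtain \<theta>' where c2: "crm_fgm M' N' X' FN FX \<theta>'" and como: "fgm_comonotone M' N' \<theta>'"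
    using crm_como by blast
  interpret P1: prob_space M using crm_basic[OF c1] by simp
  interpret P2: prob_space M' using crm_basic[OF c2] by simp
  have Nm: "N \<in> measurable M (count_space UNIV)" using crm_basic[OF c1] by simp
  have Nm': "N' \<in> measurable M' (count_space UNIV)" using crm_basic[OF c2] by simp
  have Xm: "\<And>j. 1 \<le> j \<Longrightarrow> X j \<in> borel_measurable M" using crm_basic[OF c1] by simp
  have Xm': "\<And>j. 1 \<le> j \<Longrightarrow> X' j \<in> borel_measurable M'" using crm_basic[OF c2] by simp
  have pos: "\<And>j \<omega>. 1 \<le> j \<Longrightarrow> \<omega> \<in> space M \<Longrightarrow> 0 < X j \<omega>" using crm_basic[OF c1] by simp
  have pos': "\<And>j \<omega>. 1 \<le> j \<Longrightarrow> \<omega> \<in> space M' \<Longrightarrow> 0 < X' j \<omega>" using crm_basic[OF c2] by simp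
  define \<psi> where "\<psi> t = \<phi> t - \<phi> 0" for t
  have mo: "mono \<psi>" using mo\<phi> unfolding \<psi>_def mono_def by auto
  have cv: "convex_on UNIV \<psi>"
  proof -
    have "convex_on UNIV (\<lambda>t. \<phi> t + (- \<phi> 0))" by (intro convex_on_add cv\<phi>) (simp add: convex_on_const)
    then show ?thesis unfolding \<psi>_def by simp
  qed
  have p0: "\<psi> 0 = 0" by (simp add: \<psi>_def)
  define \<nu>s :: "nat \<Rightarrow> real measure" where "\<nu>s j = (if j = 0 then distr M borel (\<lambda>\<omega>. real (N \<omega>)) else distr M borel (X 1))" for j
  have Nr: "(\<lambda>\<omega>. real (N \<omega>)) \<in> borel_measurable M" by (rule measurable_compose[OF Nm]) simp
  have X1: "X 1 \<in> borel_measurable M" by (rule Xm) simp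
  have nu: "nus \<nu>s"
    unfolding nus_def
  proof (intro conjI allI)
    fix j
    show "prob_space (\<nu>s j)" unfolding \<nu>s_def
      using P1.prob_space_distr[OF Nr] P1.prob_space_distr[OF X1] by simp
  next
    fix j
    show "sets (\<nu>s j) = sets borel" unfolding \<nu>s_def by simp
  qed
  have cdfN: "measure (\<nu>s 0) {..t} = FN t" for t
  proof -
    have "measure (\<nu>s 0) {..t} = measure M ((\<lambda>\<omega>. real (N \<omega>)) -` {..t} \<inter> space M)"
      unfolding \<nu>s_def by (simp add: measure_distr[OF Nr])
    also have "(\<lambda>\<omega>. real (N \<omega>)) -` {..t} \<inter> space M = {\<omega>\<in>space M. real (N \<omega>) \<le> t}" by auto
    finally show ?thesis using crm_basic(5)[OF c1] by simp
  qed
  have cdfX: "measure (\<nu>s j) {..x} = FX x" if "1 \<le> j" for j x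
  proof -
    have "measure (\<nu>s j) {..x} = measure M (X 1 -` {..x} \<inter> space M)"
    proof -
      have "measure (distr M borel (X 1)) {..x} = measure M (X 1 -` {..x} \<inter> space M)"
        by (rule measure_distr[OF X1]) simp
      then show ?thesis using that unfolding \<nu>s_def by simp
    qed
    also have "X 1 -` {..x} \<inter> space M = {\<omega>\<in>space M. X 1 \<omega> \<le> x}" by auto
    finally show ?thesis using crm_basic(6)[OF c1, of 1] by simp
  qed
  have agg_nn: "0 \<le> agg N X \<omega>" if "\<omega> \<in> space M" for \<omega>
    unfolding agg_def using pos[OF _ that] by (intro sum_nonneg) (auto intro: less_imp_le)
  have agg_nn': "0 \<le> agg N' X' \<omega>" if "\<omega> \<in> space M'" for \<omega>
    unfolding agg_def using pos'[OF _ that] by (intro sum_nonneg) (auto intro: less_imp_le)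
  have IC1: "integrable M (\<lambda>_. \<phi> 0)" by (rule P1.integrable_const)
  have IC2: "integrable M' (\<lambda>_. \<phi> 0)" by (rule P2.integrable_const)
  have J1: "integrable M (\<lambda>\<omega>. \<psi> (agg N X \<omega>))"
    unfolding \<psi>_def by (intro Bochner_Integration.integrable_diff I1 IC1)
  have J2: "integrable M' (\<lambda>\<omega>. \<psi> (agg N' X' \<omega>))"
    unfolding \<psi>_def by (intro Bochner_Integration.integrable_diff I2 IC2)
  have nn1: "AE \<omega> in M. 0 \<le> \<psi> (agg N X \<omega>)"
    by (intro AE_I2 psi_nonneg[OF mo p0] agg_nn)
  have nn2: "AE \<omega> in M'. 0 \<le> \<psi> (agg N' X' \<omega>)"
    by (intro AE_I2 psi_nonneg[OF mo p0] agg_nn')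
  have E1: "(\<integral>\<^sup>+\<omega>. ennreal (\<psi> (agg N X \<omega>)) \<partial>M) = ennreal (\<integral>\<omega>. \<psi> (agg N X \<omega>) \<partial>M)"
    by (rule nn_integral_eq_integral[OF J1 nn1])
  have E2: "(\<integral>\<^sup>+\<omega>. ennreal (\<psi> (agg N' X' \<omega>)) \<partial>M') = ennreal (\<integral>\<omega>. \<psi> (agg N' X' \<omega>) \<partial>M')"
    by (rule nn_integral_eq_integral[OF J2 nn2])
  have fin': "(\<integral>\<^sup>+\<omega>. ennreal (\<psi> (agg N' X' \<omega>)) \<partial>M') \<noteq> \<infinity>" unfolding E2 by simp
  have stepK: "(\<integral>\<^sup>+\<omega>. ennreal (\<psi> (SK K N X \<omega>)) \<partial>M) \<le> (\<integral>\<^sup>+\<omega>. ennreal (\<psi> (SK K N' X' \<omega>)) \<partial>M')" for K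
    by (rule step_K[OF c1 c2 como nu cdfN cdfX mo cv p0 fin'])
  have lim: "(\<integral>\<^sup>+\<omega>. ennreal (\<psi> (agg N X \<omega>)) \<partial>M) = (SUP K. \<integral>\<^sup>+\<omega>. ennreal (\<psi> (SK K N X \<omega>)) \<partial>M)"
    if Nm: "N \<in> measurable M (count_space UNIV)" and Xm: "\<And>j. 1 \<le> j \<Longrightarrow> X j \<in> borel_measurable M"
      and pos: "\<And>j \<omega>. 1 \<le> j \<Longrightarrow> \<omega> \<in> space M \<Longrightarrow> 0 < X j \<omega>"
    for M :: "'c measure" and N X
  proof -
    define f where "f K \<omega> = ennreal (\<psi> (SK K N X \<omega>))" for K \<omega>
    have inc: "incseq f"
      unfolding f_def by (intro monoI le_funI ennreal_leI monoD[OF mo] SK_mono) (simp add: le_fun_def)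
    have fm: "f K \<in> borel_measurable M" for K
      unfolding f_def
      by (intro measurable_compose[OF SK_meas[OF Nm Xm] measurable_compose[OF _ measurable_ennreal]] borel_measurable_mono mo)
    have sup: "(SUP K. f K \<omega>) = ennreal (\<psi> (agg N X \<omega>))" if w: "\<omega> \<in> space M" for \<omega>
    proof (rule antisym)
      show "(SUP K. f K \<omega>) \<le> ennreal (\<psi> (agg N X \<omega>))"
        unfolding f_def by (intro SUP_least ennreal_leI monoD[OF mo] SK_le_agg pos w)
      have "ennreal (\<psi> (agg N X \<omega>)) = f (N \<omega>) \<omega>"
        unfolding f_def using SK_agg[of X \<omega> N] pos[OF _ w] by simp
      also have "\<dots> \<le> (SUP K. f K \<omega>)" by (rule SUP_upper) simp
      finally show "ennreal (\<psi> (agg N X \<omega>)) \<le> (SUP K. f K \<omega>)" .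
    qed
    have "(\<integral>\<^sup>+\<omega>. ennreal (\<psi> (agg N X \<omega>)) \<partial>M) = (\<integral>\<^sup>+\<omega>. (SUP K. f K \<omega>) \<partial>M)"
      by (intro nn_integral_cong) (simp add: sup)
    also have "\<dots> = (SUP K. integral\<^sup>N M (f K))" by (rule nn_integral_monotone_convergence_SUP[OF inc fm])
    finally show ?thesis unfolding f_def .
  qed
  have "ennreal (\<integral>\<omega>. \<psi> (agg N X \<omega>) \<partial>M) \<le> ennreal (\<integral>\<omega>. \<psi> (agg N' X' \<omega>) \<partial>M')"
  proof -
    have "ennreal (\<integral>\<omega>. \<psi> (agg N X \<omega>) \<partial>M) = (SUP K. \<integral>\<^sup>+\<omega>. ennreal (\<psi> (SK K N X \<omega>)) \<partial>M)"
      using lim[OF Nm Xm pos] E1 by simp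
    also have "\<dots> \<le> (SUP K. \<integral>\<^sup>+\<omega>. ennreal (\<psi> (SK K N' X' \<omega>)) \<partial>M')"
      by (intro SUP_mono) (use stepK in blast)
    also have "\<dots> = ennreal (\<integral>\<omega>. \<psi> (agg N' X' \<omega>) \<partial>M')"
      using lim[OF Nm' Xm' pos'] E2 by simp
    finally show ?thesis .
  qed
  moreover have "0 \<le> (\<integral>\<omega>. \<psi> (agg N' X' \<omega>) \<partial>M')" by (rule integral_nonneg_AE[OF nn2])
  ultimately have le: "(\<integral>\<omega>. \<psi> (agg N X \<omega>) \<partial>M) \<le> (\<integral>\<omega>. \<psi> (agg N' X' \<omega>) \<partial>M')"
    by (simp add: ennreal_le_iff)
  have "(\<integral>\<omega>. \<phi> (agg N X \<omega>) \<partial>M) = (\<integral>\<omega>. \<psi> (agg N X \<omega>) + \<phi> 0 \<partial>M)"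
    by (simp add: \<psi>_def)
  also have "\<dots> = (\<integral>\<omega>. \<psi> (agg N X \<omega>) \<partial>M) + \<phi> 0"
    by (simp add: Bochner_Integration.integral_add[OF J1 IC1] P1.prob_space)
  finally have A: "(\<integral>\<omega>. \<phi> (agg N X \<omega>) \<partial>M) = (\<integral>\<omega>. \<psi> (agg N X \<omega>) \<partial>M) + \<phi> 0" .
  have "(\<integral>\<omega>. \<phi> (agg N' X' \<omega>) \<partial>M') = (\<integral>\<omega>. \<psi> (agg N' X' \<omega>) + \<phi> 0 \<partial>M')"
    by (simp add: \<psi>_def)
  also have "\<dots> = (\<integral>\<omega>. \<psi> (agg N' X' \<omega>) \<partial>M') + \<phi> 0"
    by (simp add: Bochner_Integration.integral_add[OF J2 IC2] P2.prob_space)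
  finally have B: "(\<integral>\<omega>. \<phi> (agg N' X' \<omega>) \<partial>M') = (\<integral>\<omega>. \<psi> (agg N' X' \<omega>) \<partial>M') + \<phi> 0" .
  show "(\<integral>\<omega>. \<phi> (agg N X \<omega>) \<partial>M) \<le> (\<integral>\<omega>. \<phi> (agg N' X' \<omega>) \<partial>M')"
    unfolding A B using le by simp
qed


end
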